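(* (1) $\varepsilon^{cop}=\varepsilon$; (2) $S(A)\subseteq A$, $S^{cop}(A)\subseteq A$ and $S^{cop}=S^{-1}$.
   Context: Let $(A,\Delta)$ be a generalized multiplier Hopf coquasigroup: $A$ an associative algebra over a field $k$ with non-degenerate product, $\Delta:A\to M(A\otimes A)$ an algebra homomorphism (not necessarily coassociative) with Galois maps $T_{1}(a\otimes b)=\Delta(a)(1\otimes b)$, $T_{2}(a\otimes b)=(a\otimes 1)\Delta(b)$ in $A\otimes A$, $\varepsilon:A\to k$ linear with $(\varepsilon\otimes\iota)T_{1}(a\otimes b)=ab=(\iota\otimes\varepsilon)T_{2}(a\otimes b)$, $T_{1},T_{2}$ bijective, $T_{1}^{-1}=(\iota\otimes\varepsilon\otimes\iota)(\iota\otimes T_{1}^{-1})(\Delta\otimes\iota)$ and $T_{2}^{-1}=(\iota\otimes\varepsilon\otimes\iota)(T_{2}^{-1}\otimes\iota)(\iota\otimes\Delta)$; its antipode $S:A\to M(A)$ is defined by $S(a)b=(\varepsilon\otimes\iota)T_{1}^{-1}(a\otimes b)$. Assume $(A,\Delta)$ is regular, i.e. $(A,\Delta^{cop})$ (with $\Delta^{cop}$ the flipped comultiplication) is again a generalized multiplier Hopf coquasigroup, and let $\varepsilon^{cop}$ and $S^{cop}$ be its associated counit and antipode. *)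

theory Defs
  imports Complex_Main
begin

text \<open>Algebraic tensor products over a field, characterised intrinsically:
  tz is bilinear, its image spans Z, and sums of tensors with linearly
  independent first legs vanish only if all second legs vanish.\<close>

definition is_tensor ::
  "('k::field \<Rightarrow> 'x::ab_group_add \<Rightarrow> 'x) \<Rightarrow> ('k \<Rightarrow> 'y::ab_group_add \<Rightarrow> 'y)
   \<Rightarrow> ('k \<Rightarrow> 'z::ab_group_add \<Rightarrow> 'z) \<Rightarrow> ('x \<Rightarrow> 'y \<Rightarrow> 'z) \<Rightarrow> bool" where
  "is_tensor sX sY sZ tz \<longleftrightarrow>
     vector_space sX \<and> vector_space sY \<and> vector_space sZ \<and>
     (\<forall>y. Vector_Spaces.linear sX sZ (\<lambda>x. tz x y)) \<and> (\<forall>x. Vector_Spaces.linear sY sZ (tz x)) \<and>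
     module.span sZ {tz x y | x y. True} = UNIV \<and>
     (\<forall>n (xs::nat \<Rightarrow> 'x) (ys::nat \<Rightarrow> 'y).
        inj_on xs {..<n} \<and> \<not> module.dependent sX (xs ` {..<n}) \<and>
        (\<Sum>i<n. tz (xs i) (ys i)) = 0 \<longrightarrow> (\<forall>i<n. ys i = 0))"

definition tlift ::
  "('k::field \<Rightarrow> 'z::ab_group_add \<Rightarrow> 'z) \<Rightarrow> ('k \<Rightarrow> 'w::ab_group_add \<Rightarrow> 'w)
   \<Rightarrow> ('x \<Rightarrow> 'y \<Rightarrow> 'z) \<Rightarrow> ('x \<Rightarrow> 'y \<Rightarrow> 'w) \<Rightarrow> 'z \<Rightarrow> 'w" where
  "tlift sZ sW tz h = (THE g. Vector_Spaces.linear sZ sW g \<and> (\<forall>x y. g (tz x y) = h x y))"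

definition tmul ::
  "('k::field \<Rightarrow> 't::ab_group_add \<Rightarrow> 't) \<Rightarrow> ('a \<Rightarrow> 'a \<Rightarrow> 't) \<Rightarrow> ('a \<Rightarrow> 'a \<Rightarrow> 'a)
   \<Rightarrow> 't \<Rightarrow> 't \<Rightarrow> 't" where
  "tmul sT tp m x y =
     tlift sT sT tp (\<lambda>a b. tlift sT sT tp (\<lambda>c d. tp (m a c) (m b d)) y) x"

text \<open>x \<mapsto> (1\<otimes>b)x,  x \<mapsto> x(a\<otimes>1),  x \<mapsto> (c\<otimes>1)x,  x \<mapsto> x(1\<otimes>c), and the flip.\<close>
definition mul_1b where "mul_1b sT tp m b = tlift sT sT tp (\<lambda>c d. tp c (m b d))"
definition mul_a1 where "mul_a1 sT tp m a = tlift sT sT tp (\<lambda>c d. tp (m c a) d)"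
definition lmul_c1 where "lmul_c1 sT tp m c = tlift sT sT tp (\<lambda>x y. tp (m c x) y)"
definition rmul_1c where "rmul_1c sT tp m c = tlift sT sT tp (\<lambda>x y. tp x (m y c))"
definition tflip where "tflip sT tp = tlift sT sT tp (\<lambda>x y. tp y x)"

text \<open>Galois maps T1(a\<otimes>b) = \<Delta>(a)(1\<otimes>b), T2(a\<otimes>b) = (a\<otimes>1)\<Delta>(b), where the
  multiplier \<Delta>(a) of A\<otimes>A is given by its left action DL a and right action DR a.\<close>
definition gT1 where
  "gT1 sT tp m DL = tlift sT sT tp
     (\<lambda>a b. THE y. \<forall>x. tmul sT tp m y x = DL a (mul_1b sT tp m b x))"
definition gT2 where
  "gT2 sT tp m DR = tlift sT sT tp
     (\<lambda>a b. THE y. \<forall>x. tmul sT tp m x y = DR b (mul_a1 sT tp m a x))"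

definition epsI where "epsI sA sT tp eps = tlift sT sA tp (\<lambda>c d. sA (eps c) d)"
definition Ieps where "Ieps sA sT tp eps = tlift sT sA tp (\<lambda>c d. sA (eps d) c)"

text \<open>A\<otimes>A\<otimes>A is modelled as A\<otimes>(A\<otimes>A) with tensor map tq.
  assoc_l w z = w \<otimes> z ; idF F = \<iota>\<otimes>F ; Fid G = G\<otimes>\<iota>.\<close>
definition assoc_l where
  "assoc_l sT sU tp tq w z = tlift sT sU tp (\<lambda>x y. tq x (tp y z)) w"
definition idF where
  "idF sT sU tp tq F = tlift sU sT tq (\<lambda>x w. tp x (F w))"
definition Fid where
  "Fid sT sU tp tq G =
     tlift sU sT tq (\<lambda>x w. tlift sT sT tp (\<lambda>y z. tp (G (tp x y)) z) w)"

definition gmhc ::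
  "('k::field \<Rightarrow> 'a::ab_group_add \<Rightarrow> 'a) \<Rightarrow> ('k \<Rightarrow> 't::ab_group_add \<Rightarrow> 't)
   \<Rightarrow> ('k \<Rightarrow> 'u::ab_group_add \<Rightarrow> 'u) \<Rightarrow> ('a \<Rightarrow> 'a \<Rightarrow> 'a)
   \<Rightarrow> ('a \<Rightarrow> 'a \<Rightarrow> 't) \<Rightarrow> ('a \<Rightarrow> 't \<Rightarrow> 'u)
   \<Rightarrow> ('a \<Rightarrow> 't \<Rightarrow> 't) \<Rightarrow> ('a \<Rightarrow> 't \<Rightarrow> 't) \<Rightarrow> ('a \<Rightarrow> 'k) \<Rightarrow> bool" where
  "gmhc sA sT sU m tp tq DL DR eps \<longleftrightarrow>
     vector_space sA \<and>
     (\<forall>b. Vector_Spaces.linear sA sA (\<lambda>a. m a b)) \<and> (\<forall>a. Vector_Spaces.linear sA sA (m a)) \<and>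
     (\<forall>a b c. m (m a b) c = m a (m b c)) \<and>
     (\<forall>a. (\<forall>b. m a b = 0) \<longrightarrow> a = 0) \<and> (\<forall>a. (\<forall>b. m b a = 0) \<longrightarrow> a = 0) \<and>
     is_tensor sA sA sT tp \<and> is_tensor sA sT sU tq \<and>
     (\<forall>a. Vector_Spaces.linear sT sT (DL a) \<and> Vector_Spaces.linear sT sT (DR a) \<and>
          (\<forall>x y. tmul sT tp m (DR a x) y = tmul sT tp m x (DL a y))) \<and>
     (\<forall>x. Vector_Spaces.linear sA sT (\<lambda>a. DL a x) \<and> Vector_Spaces.linear sA sT (\<lambda>a. DR a x)) \<and>
     (\<forall>a b. DL (m a b) = DL a \<circ> DL b \<and> DR (m a b) = DR b \<circ> DR a) \<and>
     (\<forall>a b. \<exists>y. \<forall>x. tmul sT tp m y x = DL a (mul_1b sT tp m b x)) \<and>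
     (\<forall>a b. \<exists>y. \<forall>x. tmul sT tp m x y = DR b (mul_a1 sT tp m a x)) \<and>
     Vector_Spaces.linear sA (*) eps \<and>
     (\<forall>a b. epsI sA sT tp eps (gT1 sT tp m DL (tp a b)) = m a b) \<and>
     (\<forall>a b. Ieps sA sT tp eps (gT2 sT tp m DR (tp a b)) = m a b) \<and>
     bij (gT1 sT tp m DL) \<and> bij (gT2 sT tp m DR) \<and>
     (\<forall>c a b. lmul_c1 sT tp m c (inv (gT1 sT tp m DL) (tp a b)) =
        idF sT sU tp tq (epsI sA sT tp eps \<circ> inv (gT1 sT tp m DL))
          (assoc_l sT sU tp tq (gT2 sT tp m DR (tp c a)) b)) \<and>
     (\<forall>c a b. rmul_1c sT tp m c (inv (gT2 sT tp m DR) (tp a b)) =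
        Fid sT sU tp tq (Ieps sA sT tp eps \<circ> inv (gT2 sT tp m DR))
          (tq a (gT1 sT tp m DL (tp b c))))"

text \<open>Antipode, given by its left action: S(a)b = (\<epsilon>\<otimes>\<iota>)T1^{-1}(a\<otimes>b).\<close>
definition gS where
  "gS sA sT tp m DL eps a b = epsI sA sT tp eps (inv (gT1 sT tp m DL) (tp a b))"

definition copL where "copL sT tp DL a x = tflip sT tp (DL a (tflip sT tp x))"

end

theory Submission
  imports Defs
begin


lemma vs_field: "vector_space ((*) :: 'k::field \<Rightarrow> 'k \<Rightarrow> 'k)"
  by unfold_locales (auto simp: algebra_simps)

locale tens =
  fixes sX :: "'k::field \<Rightarrow> 'x::ab_group_add \<Rightarrow> 'x"
    and sY :: "'k \<Rightarrow> 'y::ab_group_add \<Rightarrow> 'y"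
    and sZ :: "'k \<Rightarrow> 'z::ab_group_add \<Rightarrow> 'z"
    and tz :: "'x \<Rightarrow> 'y \<Rightarrow> 'z"
  assumes T: "is_tensor sX sY sZ tz"
begin

lemma vsX: "vector_space sX" and vsY: "vector_space sY" and vsZ: "vector_space sZ"
  using T unfolding is_tensor_def by auto

sublocale X: vector_space sX by (rule vsX)
sublocale Y: vector_space sY by (rule vsY)
sublocale Z: vector_space sZ by (rule vsZ)

lemma lin1: "Vector_Spaces.linear sX sZ (\<lambda>x. tz x y)" and lin2: "Vector_Spaces.linear sY sZ (tz x)"
  using T unfolding is_tensor_def by auto

lemma spanZ: "Z.span {tz x y | x y. True} = UNIV"
  using T unfolding is_tensor_def by auto

lemma indep_nat: "inj_on (xs :: nat \<Rightarrow> 'x) {..<(n::nat)} \<Longrightarrow> X.independent (xs ` {..<n}) \<Longrightarrow>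
        (\<Sum>i<n. tz (xs i) (ys i)) = 0 \<Longrightarrow> i < n \<Longrightarrow> ys i = 0"
  using T unfolding is_tensor_def
  apply (elim conjE)
  apply (drule spec[of _ n])
  apply (drule spec[of _ xs])
  apply (drule spec[of _ ys])
  apply blast
  done

lemma indep_set:
  assumes F: "finite F" and ind: "X.independent F" and s: "(\<Sum>b\<in>F. tz b (g b)) = 0"
    and b: "b \<in> F"
  shows "g b = 0"
proof -
  obtain n :: nat and f where Ff: "F = f ` {i. i < n}" and inj: "inj_on f {i. i < n}"
    using finite_imp_nat_seg_image_inj_on[OF F] by blast
  have e: "{i. i < n} = {..<n}" by auto
  have "(\<Sum>i<n. tz (f i) (g (f i))) = (\<Sum>b\<in>F. tz b (g b))"
    unfolding Ff e using inj e by (simp add: sum.reindex)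
  with s have s0: "(\<Sum>i<n. tz (f i) ((g \<circ> f) i)) = 0" by simp
  from b obtain i where i: "i < n" "b = f i" using Ff by auto
  have "(g \<circ> f) i = 0"
    by (rule indep_nat[OF _ _ s0 i(1)]) (use inj ind Ff e in auto)
  then show ?thesis using i by simp
qed

lemma tz_sum_right: "tz b (\<Sum>x\<in>S. sY (r x) (y x)) = (\<Sum>x\<in>S. sZ (r x) (tz b (y x)))"
proof -
  interpret l: Vector_Spaces.linear sY sZ "tz b" by (rule lin2)
  show ?thesis by (simp add: l.sum l.scale)
qed

lemma tz_diff_right: "tz b (c - d) = tz b c - tz b d"
proof -
  interpret l: Vector_Spaces.linear sY sZ "tz b" by (rule lin2)
  show ?thesis by (simp add: l.diff)
qed

lemma tz_neg_right: "tz b (- d) = - tz b d"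
proof -
  interpret l: Vector_Spaces.linear sY sZ "tz b" by (rule lin2)
  show ?thesis by (simp add: l.neg)
qed

lemma uniq:
  assumes g1: "Vector_Spaces.linear sZ sW g1" and g2: "Vector_Spaces.linear sZ sW g2"
    and eq: "\<And>x y. g1 (tz x y) = g2 (tz x y)"
  shows "g1 = g2"
proof
  fix z
  interpret l1: Vector_Spaces.linear sZ sW g1 by (rule g1)
  interpret p: vector_space_pair sZ sW by unfold_locales
  have "z \<in> Z.span {tz x y | x y. True}" using spanZ by simp
  then show "g1 z = g2 z"
    by (rule p.linear_eq_on[OF g1 g2]) (auto simp: eq)
qed

lemma tlift_ex:
  assumes W: "vector_space sW"
    and h1: "\<And>y. Vector_Spaces.linear sX sW (\<lambda>x. h x y)"
    and h2: "\<And>x. Vector_Spaces.linear sY sW (h x)"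
  shows "\<exists>g. Vector_Spaces.linear sZ sW g \<and> (\<forall>x y. g (tz x y) = h x y)"
proof -
  obtain Bx where Bx: "X.independent Bx" "UNIV \<subseteq> X.span Bx"
    using X.basis_exists[of UNIV] by blast
  obtain By where By: "Y.independent By" "UNIV \<subseteq> Y.span By"
    using Y.basis_exists[of UNIV] by blast
  define pr where "pr = (\<lambda>(b, c). tz b c)"
  have By0: "0 \<notin> By" using By(1) Y.dependent_zero by blast
  have inj: "inj_on pr (Bx \<times> By)"
  proof (rule inj_onI, clarify)
    fix b c b' c' assume b: "b \<in> Bx" "c \<in> By" "b' \<in> Bx" "c' \<in> By" and eq: "pr (b, c) = pr (b', c')"
    then have eq: "tz b c = tz b' c'" by (simp add: pr_def)
    show "b = b' \<and> c = c'"
    proof (cases "b = b'")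
      case True
      have "(\<Sum>x\<in>{b}. tz x (c - c')) = 0" using eq True by (simp add: tz_diff_right)
      then have "c - c' = 0"
        using indep_set[of "{b}" "\<lambda>_. c - c'" b] X.independent_mono[OF Bx(1)] b X.dependent_zero[of Bx] Bx(1)
        by auto
      then show ?thesis using True by simp
    next
      case False
      have "(\<Sum>x\<in>{b, b'}. tz x (if x = b then c else - c')) = 0"
        using eq False by (simp add: tz_neg_right)
      then have "(if b = b then c else - c') = 0"
        using indep_set[of "{b, b'}" "\<lambda>x. if x = b then c else - c'" b] X.independent_mono[OF Bx(1)] b
        by auto
      then show ?thesis using By0 b by simp
    qed
  qed
  let ?P = "pr ` (Bx \<times> By)"
  have ind: "Z.independent ?P"
    unfolding Z.independent_explicit_finite_subsets
  proof (intro allI impI ballI)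
    fix S u v assume S: "S \<subseteq> ?P" "finite S" and su: "(\<Sum>v\<in>S. sZ (u v) v) = 0" and v: "v \<in> S"
    define G where "G = pr -` S \<inter> (Bx \<times> By)"
    have finG: "finite G" unfolding G_def by (rule finite_vimage_IntI[OF S(2) inj])
    have SG: "S = pr ` G" using S(1) unfolding G_def by auto
    have injG: "inj_on pr G" using inj unfolding G_def by (rule inj_on_subset) auto
    define Gb where "Gb b = {x \<in> G. fst x = b}" for b
    have fin_fst: "finite (fst ` G)" using finG by simp
    have "(\<Sum>v\<in>S. sZ (u v) v) = (\<Sum>x\<in>G. sZ (u (pr x)) (pr x))"
      unfolding SG using injG by (simp add: sum.reindex)
    also have "\<dots> = (\<Sum>b\<in>fst ` G. \<Sum>x\<in>Gb b. sZ (u (pr x)) (pr x))"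
      unfolding Gb_def by (rule sum.group[symmetric]) (use finG in auto)
    also have "\<dots> = (\<Sum>b\<in>fst ` G. tz b (\<Sum>x\<in>Gb b. sY (u (pr x)) (snd x)))"
      by (intro sum.cong refl) (auto simp: tz_sum_right Gb_def pr_def split: prod.splits intro!: sum.cong)
    finally have zero: "(\<Sum>b\<in>fst ` G. tz b (\<Sum>x\<in>Gb b. sY (u (pr x)) (snd x))) = 0" using su by simp
    from v obtain b c where bc: "(b, c) \<in> G" "v = pr (b, c)" unfolding SG by auto
    have "fst ` G \<subseteq> Bx" unfolding G_def by auto
    then have indF: "X.independent (fst ` G)" using X.independent_mono[OF Bx(1)] by metis
    have z: "(\<Sum>x\<in>Gb b. sY (u (pr x)) (snd x)) = 0"
      by (rule indep_set[OF fin_fst indF zero]) (use bc in force)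
    have injs: "inj_on snd (Gb b)" unfolding Gb_def inj_on_def by (simp add: prod_eq_iff)
    have "(\<Sum>x\<in>Gb b. sY (u (pr x)) (snd x)) = (\<Sum>c\<in>snd ` Gb b. sY (u (tz b c)) c)"
      using injs by (simp add: sum.reindex Gb_def pr_def split_beta)
    with z have z2: "(\<Sum>c\<in>snd ` Gb b. sY (u (tz b c)) c) = 0" by simp
    have "snd ` Gb b \<subseteq> By" unfolding Gb_def G_def by auto
    moreover have "finite (snd ` Gb b)" unfolding Gb_def using finG by auto
    moreover have "c \<in> snd ` Gb b" using bc unfolding Gb_def by force
    moreover have "\<forall>S\<subseteq>By. finite S \<longrightarrow> (\<forall>u. (\<Sum>v\<in>S. sY (u v) v) = 0 \<longrightarrow> (\<forall>v\<in>S. u v = 0))"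
      using By(1) unfolding Y.independent_explicit_finite_subsets .
    ultimately have "u (tz b c) = 0"
      using z2 by (elim allE[of _ "snd ` Gb b"] allE[of _ "\<lambda>c. u (tz b c)"]) auto
    then show "u v = 0" using bc by (simp add: pr_def)
  qed
  define \<phi> where "\<phi> z = (case inv_into (Bx \<times> By) pr z of (b, c) \<Rightarrow> h b c)" for z
  interpret p: vector_space_pair sZ sW unfolding vector_space_pair_def using vsZ W by simp
  define g where "g = p.construct ?P \<phi>"
  have lg: "Vector_Spaces.linear sZ sW g" unfolding g_def by (rule p.linear_construct[OF ind])
  have gb: "g (tz b c) = h b c" if "b \<in> Bx" "c \<in> By" for b c
  proof -
    have "tz b c \<in> ?P" using that by (force simp: pr_def)
    then have "g (tz b c) = \<phi> (tz b c)" unfolding g_def by (rule p.construct_basis[OF ind])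
    also have "inv_into (Bx \<times> By) pr (tz b c) = (b, c)"
      using inv_into_f_f[OF inj, of "(b, c)"] that by (simp add: pr_def)
    then have "\<phi> (tz b c) = h b c" by (simp add: \<phi>_def)
    finally show ?thesis .
  qed
  interpret pX: vector_space_pair sX sW unfolding vector_space_pair_def using vsX W by simp
  interpret pY: vector_space_pair sY sW unfolding vector_space_pair_def using vsY W by simp
  have gx: "g (tz x c) = h x c" if "c \<in> By" for x c
  proof -
    have "x \<in> X.span Bx" using Bx by auto
    then show ?thesis
      by (rule pX.linear_eq_on[OF Vector_Spaces.linear_compose[OF lin1 lg, unfolded o_def] h1])
        (use gb that in auto)
  qed
  have "g (tz x y) = h x y" for x y
  proof -
    have "y \<in> Y.span By" using By by auto
    then show ?thesis
      by (rule pY.linear_eq_on[OF Vector_Spaces.linear_compose[OF lin2 lg, unfolded o_def] h2])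
        (use gx in auto)
  qed
  then show ?thesis using lg by blast
qed

lemma tlift:
  assumes W: "vector_space sW"
    and h1: "\<And>y. Vector_Spaces.linear sX sW (\<lambda>x. h x y)"
    and h2: "\<And>x. Vector_Spaces.linear sY sW (h x)"
  shows "Vector_Spaces.linear sZ sW (tlift sZ sW tz h)" "tlift sZ sW tz h (tz x y) = h x y"
proof -
  have ex: "\<exists>!g. Vector_Spaces.linear sZ sW g \<and> (\<forall>x y. g (tz x y) = h x y)"
    using tlift_ex[OF W h1 h2] uniq by metis
  have "Vector_Spaces.linear sZ sW (tlift sZ sW tz h) \<and> (\<forall>x y. tlift sZ sW tz h (tz x y) = h x y)"
    unfolding tlift_def by (rule theI'[OF ex])
  then show "Vector_Spaces.linear sZ sW (tlift sZ sW tz h)" "tlift sZ sW tz h (tz x y) = h x y"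
    by auto
qed

end


lemma vs_mod: "vector_space s \<Longrightarrow> module s" by (simp add: module_iff_vector_space)

lemma linI: "vector_space s1 \<Longrightarrow> vector_space s2 \<Longrightarrow> (\<And>x y. f (x + y) = f x + f y) \<Longrightarrow>
   (\<And>c x. f (s1 c x) = s2 c (f x)) \<Longrightarrow> Vector_Spaces.linear s1 s2 f"
  unfolding Vector_Spaces.linear_iff by auto

lemma lin_add: "Vector_Spaces.linear s1 s2 f \<Longrightarrow> f (x + y) = f x + f y"
  unfolding Vector_Spaces.linear_iff by auto
lemma lin_scale: "Vector_Spaces.linear s1 s2 f \<Longrightarrow> f (s1 c x) = s2 c (f x)"
  unfolding Vector_Spaces.linear_iff by auto
lemma lin_vs1: "Vector_Spaces.linear s1 s2 f \<Longrightarrow> vector_space s1"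
  unfolding Vector_Spaces.linear_iff by auto
lemma lin_vs2: "Vector_Spaces.linear s1 s2 f \<Longrightarrow> vector_space s2"
  unfolding Vector_Spaces.linear_iff by auto
lemma lin_0: "Vector_Spaces.linear s1 s2 f \<Longrightarrow> f 0 = 0"
  by (metis add_cancel_left_left lin_add)
lemma lin_neg: "Vector_Spaces.linear s1 s2 f \<Longrightarrow> f (- x) = - f x"
  by (metis add.right_inverse add_eq_0_iff lin_0 lin_add)
lemma lin_diff: "Vector_Spaces.linear s1 s2 f \<Longrightarrow> f (x - y) = f x - f y"
  by (metis diff_conv_add_uminus lin_add lin_neg)
lemma lin_sum: "Vector_Spaces.linear s1 s2 f \<Longrightarrow> f (sum g S) = (\<Sum>i\<in>S. f (g i))"
  by (induction S rule: infinite_finite_induct) (auto simp: lin_0 lin_add)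
lemma lin_comp: "Vector_Spaces.linear s1 s2 f \<Longrightarrow> Vector_Spaces.linear s2 s3 g \<Longrightarrow>
   Vector_Spaces.linear s1 s3 (\<lambda>x. g (f x))"
  using Vector_Spaces.linear_compose[of s1 s2 f s3 g] by (simp add: o_def)
lemma lin_id: "vector_space s \<Longrightarrow> Vector_Spaces.linear s s (\<lambda>x. x)"
  by (rule linI) auto
lemma lin_plus: "Vector_Spaces.linear s1 s2 f \<Longrightarrow> Vector_Spaces.linear s1 s2 g \<Longrightarrow>
   Vector_Spaces.linear s1 s2 (\<lambda>x. f x + g x)"
  apply (rule linI)
  apply (erule lin_vs1)
  apply (erule lin_vs2)
  apply (simp add: lin_add)
  apply (simp add: lin_scale module.scale_right_distrib[OF vs_mod[OF lin_vs2]])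
  done
lemma lin_minus: "Vector_Spaces.linear s1 s2 f \<Longrightarrow> Vector_Spaces.linear s1 s2 g \<Longrightarrow>
   Vector_Spaces.linear s1 s2 (\<lambda>x. f x - g x)"
  apply (rule linI)
  apply (erule lin_vs1)
  apply (erule lin_vs2)
  apply (simp add: lin_add)
  apply (simp add: lin_scale module.scale_right_diff_distrib[OF vs_mod[OF lin_vs2]])
  done
lemma lin_const0: "vector_space s1 \<Longrightarrow> vector_space s2 \<Longrightarrow> Vector_Spaces.linear s1 s2 (\<lambda>x. 0)"
  by (rule linI) (auto simp: module.scale_zero_right[OF vs_mod])
lemma lin_scalef: "Vector_Spaces.linear s1 s2 f \<Longrightarrow> Vector_Spaces.linear s1 s2 (\<lambda>x. s2 c (f x))"
  apply (rule linI)
  apply (erule lin_vs1)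
  apply (erule lin_vs2)
  apply (simp add: lin_add module.scale_right_distrib[OF vs_mod[OF lin_vs2]])
  apply (simp add: lin_scale module.scale_scale[OF vs_mod[OF lin_vs2]] mult.commute)
  done

lemma lin_inv:
  assumes l: "Vector_Spaces.linear s1 s2 f" and b: "bij f"
  shows "Vector_Spaces.linear s2 s1 (inv f)"
proof (rule linI)
  show "vector_space s2" by (rule lin_vs2[OF l])
  show "vector_space s1" by (rule lin_vs1[OF l])
  fix x y c
  show "inv f (x + y) = inv f x + inv f y"
    by (metis b bij_inv_eq_iff l lin_add bij_inv_eq_iff[OF b] surj_f_inv_f[OF bij_is_surj[OF b]])
  show "inv f (s2 c x) = s1 c (inv f x)"
    by (metis b bij_inv_eq_iff l lin_scale surj_f_inv_f[OF bij_is_surj[OF b]])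
qed


locale base =
  fixes sA :: "'k::field \<Rightarrow> 'a::ab_group_add \<Rightarrow> 'a"
    and sT :: "'k \<Rightarrow> 't::ab_group_add \<Rightarrow> 't"
    and sU :: "'k \<Rightarrow> 'u::ab_group_add \<Rightarrow> 'u"
    and m :: "'a \<Rightarrow> 'a \<Rightarrow> 'a"
    and tp :: "'a \<Rightarrow> 'a \<Rightarrow> 't" and tq :: "'a \<Rightarrow> 't \<Rightarrow> 'u"
  assumes ml1: "\<And>b. Vector_Spaces.linear sA sA (\<lambda>a. m a b)"
    and ml2: "\<And>a. Vector_Spaces.linear sA sA (m a)"
    and assoc: "\<And>a b c. m (m a b) c = m a (m b c)"
    and nd1: "\<And>a. (\<And>b. m a b = 0) \<Longrightarrow> a = 0"
    and nd2: "\<And>a. (\<And>b. m b a = 0) \<Longrightarrow> a = 0"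
    and tpT: "is_tensor sA sA sT tp" and tqT: "is_tensor sA sT sU tq"
begin

sublocale P: tens sA sA sT tp by (rule tens.intro[OF tpT])
sublocale Q: tens sA sT sU tq by (rule tens.intro[OF tqT])

lemma vsA: "vector_space sA" and vsT: "vector_space sT" and vsU: "vector_space sU"
  using P.vsX P.vsZ Q.vsZ by auto

lemma tp_lin1: "Vector_Spaces.linear sA sT (\<lambda>x. tp x y)" by (rule P.lin1)
lemma tp_lin2: "Vector_Spaces.linear sA sT (tp x)" by (rule P.lin2)
lemma tq_lin1: "Vector_Spaces.linear sA sU (\<lambda>x. tq x y)" by (rule Q.lin1)
lemma tq_lin2: "Vector_Spaces.linear sT sU (tq x)" by (rule Q.lin2)

lemma tlP:
  assumes "vector_space sW" "\<And>y. Vector_Spaces.linear sA sW (\<lambda>x. h x y)" "\<And>x. Vector_Spaces.linear sA sW (h x)"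
  shows "Vector_Spaces.linear sT sW (tlift sT sW tp h)" "tlift sT sW tp h (tp x y) = h x y"
  using P.tlift[OF assms] by auto

lemma tlQ:
  assumes "vector_space sW" "\<And>y. Vector_Spaces.linear sA sW (\<lambda>x. h x y)" "\<And>x. Vector_Spaces.linear sT sW (h x)"
  shows "Vector_Spaces.linear sU sW (tlift sU sW tq h)" "tlift sU sW tq h (tq x y) = h x y"
  using Q.tlift[OF assms] by auto

lemma extP:
  assumes "Vector_Spaces.linear sT sW g1" "Vector_Spaces.linear sT sW g2" "\<And>x y. g1 (tp x y) = g2 (tp x y)"
  shows "g1 z = g2 z"
  using P.uniq[OF assms] by simp

lemma extQ:
  assumes "Vector_Spaces.linear sU sW g1" "Vector_Spaces.linear sU sW g2" "\<And>x y. g1 (tq x y) = g2 (tq x y)"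
  shows "g1 z = g2 z"
  using Q.uniq[OF assms] by simp

lemma extP2:
  assumes l1: "\<And>y. Vector_Spaces.linear sT sW (\<lambda>x. F x y)" and l2: "\<And>y. Vector_Spaces.linear sT sW (\<lambda>x. G x y)"
    and l3: "\<And>x. Vector_Spaces.linear sT sW (F x)" and l4: "\<And>x. Vector_Spaces.linear sT sW (G x)"
    and eq: "\<And>a b c d. F (tp a b) (tp c d) = G (tp a b) (tp c d)"
  shows "F x y = G x y"
proof -
  have "F (tp a b) y = G (tp a b) y" for a b
    by (rule extP[OF l3 l4]) (rule eq)
  then show ?thesis by (rule extP[OF l1 l2])
qed

lemma param_lin:
  assumes W: "vector_space sW" and V: "vector_space sV"
    and K: "\<And>a. Vector_Spaces.linear sT sW (K a)"
    and Kl: "\<And>c d. Vector_Spaces.linear sV sW (\<lambda>a. K a (tp c d))"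
  shows "Vector_Spaces.linear sV sW (\<lambda>a. K a y)"
proof (rule linI[OF V W])
  fix a a' c
  show "K (a + a') y = K a y + K a' y"
    by (rule extP[OF K lin_plus[OF K K]]) (rule lin_add[OF Kl])
  show "K (sV c a) y = sW c (K a y)"
    by (rule extP[OF K lin_scalef[OF K]]) (rule lin_scale[OF Kl])
qed

lemma param_linQ:
  assumes W: "vector_space sW" and V: "vector_space sV"
    and K: "\<And>a. Vector_Spaces.linear sU sW (K a)"
    and Kl: "\<And>c d. Vector_Spaces.linear sV sW (\<lambda>a. K a (tq c d))"
  shows "Vector_Spaces.linear sV sW (\<lambda>a. K a y)"
proof (rule linI[OF V W])
  fix a a' c
  show "K (a + a') y = K a y + K a' y"
    by (rule extQ[OF K lin_plus[OF K K]]) (rule lin_add[OF Kl])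
  show "K (sV c a) y = sW c (K a y)"
    by (rule extQ[OF K lin_scalef[OF K]]) (rule lin_scale[OF Kl])
qed

lemma tp_comp: "Vector_Spaces.linear sA sA f \<Longrightarrow> Vector_Spaces.linear sA sA g \<Longrightarrow>
   Vector_Spaces.linear sA sT (\<lambda>x. tp (f x) (g y))"
  by (rule lin_comp[of _ _ f _ "\<lambda>x. tp x (g y)"]) (auto intro: tp_lin1)

lemma tp_comp2: "Vector_Spaces.linear sA sA g \<Longrightarrow>
   Vector_Spaces.linear sA sT (\<lambda>y. tp x (g y))"
  by (rule lin_comp[of _ _ g _ "tp x"]) (auto intro: tp_lin2)

lemma linA_id: "Vector_Spaces.linear sA sA (\<lambda>x. x)" by (rule lin_id[OF vsA])
lemma linT_id: "Vector_Spaces.linear sT sT (\<lambda>x. x)" by (rule lin_id[OF vsT])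

lemma ml1': "Vector_Spaces.linear sA sA (\<lambda>a. m (m a b) c)"
  by (rule lin_comp[OF ml1 ml1])

end


context base begin

abbreviation "tm \<equiv> tmul sT tp m"
abbreviation "inner a b \<equiv> tlift sT sT tp (\<lambda>c d. tp (m a c) (m b d))"
abbreviation "M1b \<equiv> mul_1b sT tp m"
abbreviation "Ma1 \<equiv> mul_a1 sT tp m"
abbreviation "L1 \<equiv> lmul_c1 sT tp m"
abbreviation "R1 \<equiv> rmul_1c sT tp m"
abbreviation "fl \<equiv> tflip sT tp"
abbreviation "mu \<equiv> tlift sT sA tp m"

lemma inner: "Vector_Spaces.linear sT sT (inner a b)" "inner a b (tp c d) = tp (m a c) (m b d)"
  by (rule tlP[OF vsT tp_comp[OF ml2 ml2] tp_comp2[OF ml2]])+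

lemma inner_l1: "Vector_Spaces.linear sA sT (\<lambda>a. inner a b y)"
  by (rule param_lin[OF vsT vsA inner(1)]) (simp add: inner(2) tp_comp[OF ml1 ml2])

lemma inner_l2: "Vector_Spaces.linear sA sT (\<lambda>b. inner a b y)"
  by (rule param_lin[OF vsT vsA inner(1)]) (simp add: inner(2) tp_comp2[OF ml1])

lemma tm_def': "tm x y = tlift sT sT tp (\<lambda>a b. inner a b y) x"
  by (simp add: tmul_def)

lemma tm_lin1: "Vector_Spaces.linear sT sT (\<lambda>x. tm x y)"
  unfolding tm_def' by (rule tlP(1)[OF vsT inner_l1 inner_l2])

lemma tm_tp1: "tm (tp a b) y = inner a b y"
  unfolding tm_def' by (rule tlP(2)[OF vsT inner_l1 inner_l2])

lemma tm_tp: "tm (tp a b) (tp c d) = tp (m a c) (m b d)"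
  by (simp add: tm_tp1 inner(2))

lemma tm_lin2: "Vector_Spaces.linear sT sT (tm x)"
proof -
  have "Vector_Spaces.linear sT sT (\<lambda>y. tm x y)"
    by (rule param_lin[OF vsT vsT tm_lin1]) (simp add: tm_tp1 inner(1))
  then show ?thesis by simp
qed

lemma M1b: "Vector_Spaces.linear sT sT (M1b b)" "M1b b (tp c d) = tp c (m b d)"
  unfolding mul_1b_def by (rule tlP[OF vsT tp_lin1[of "m b d" for d] tp_comp2[OF ml2]])+

lemma Ma1: "Vector_Spaces.linear sT sT (Ma1 a)" "Ma1 a (tp c d) = tp (m c a) d"
  unfolding mul_a1_def by (rule tlP[OF vsT tp_comp[OF ml1 linA_id] tp_lin2])+

lemma L1: "Vector_Spaces.linear sT sT (L1 a)" "L1 a (tp c d) = tp (m a c) d"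
  unfolding lmul_c1_def by (rule tlP[OF vsT tp_comp[OF ml2 linA_id] tp_lin2])+

lemma R1: "Vector_Spaces.linear sT sT (R1 a)" "R1 a (tp c d) = tp c (m d a)"
  unfolding rmul_1c_def by (rule tlP[OF vsT tp_lin1 tp_comp2[OF ml1]])+

lemma fl: "Vector_Spaces.linear sT sT fl" "fl (tp c d) = tp d c"
  unfolding tflip_def by (rule tlP[OF vsT tp_lin2 tp_lin1])+

lemma mu: "Vector_Spaces.linear sT sA mu" "mu (tp c d) = m c d"
  by (rule tlP[OF vsA ml1 ml2])+

lemmas lins = M1b(1) Ma1(1) L1(1) R1(1) fl(1) mu(1) tm_lin1 tm_lin2
lemmas vals = M1b(2) Ma1(2) L1(2) R1(2) fl(2) mu(2) tm_tp

lemma M1b_lb: "Vector_Spaces.linear sA sT (\<lambda>b. M1b b x)"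
  by (rule param_lin[OF vsT vsA M1b(1)]) (simp add: M1b(2) tp_comp2[OF ml1])
lemma Ma1_lb: "Vector_Spaces.linear sA sT (\<lambda>b. Ma1 b x)"
  by (rule param_lin[OF vsT vsA Ma1(1)]) (simp add: Ma1(2) tp_comp[OF ml2 linA_id])
lemma L1_lb: "Vector_Spaces.linear sA sT (\<lambda>b. L1 b x)"
  by (rule param_lin[OF vsT vsA L1(1)]) (simp add: L1(2) tp_comp[OF ml1 linA_id])
lemma R1_lb: "Vector_Spaces.linear sA sT (\<lambda>b. R1 b x)"
  by (rule param_lin[OF vsT vsA R1(1)]) (simp add: R1(2) tp_comp2[OF ml2])

lemma tm_assoc: "tm (tm x y) z = tm x (tm y z)"
proof -
  have "tm (tm x y) (tp a b) = tm x (tm y (tp a b))" for a b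
    by (rule extP2[where F="\<lambda>x y. tm (tm x y) (tp a b)" and G="\<lambda>x y. tm x (tm y (tp a b))",
          OF lin_comp[OF tm_lin1 tm_lin1] tm_lin1 lin_comp[OF tm_lin2 tm_lin1] lin_comp[OF tm_lin1 tm_lin2]])
      (simp add: tm_tp assoc)
  then show ?thesis by (rule extP[OF tm_lin2 lin_comp[OF tm_lin2 tm_lin2]])
qed

lemma Rel1: "tm (M1b b x) y = M1b b (tm x y)"
  by (rule extP2[OF lin_comp[OF M1b(1) tm_lin1] lin_comp[OF tm_lin1 M1b(1)] tm_lin2 lin_comp[OF tm_lin2 M1b(1)]])
    (simp add: vals assoc)
lemma Rel2: "tm (L1 c x) y = L1 c (tm x y)"
  by (rule extP2[OF lin_comp[OF L1(1) tm_lin1] lin_comp[OF tm_lin1 L1(1)] tm_lin2 lin_comp[OF tm_lin2 L1(1)]])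
    (simp add: vals assoc)
lemma Rel3: "tm x (R1 c y) = R1 c (tm x y)"
  by (rule extP2[OF tm_lin1 lin_comp[OF tm_lin1 R1(1)] lin_comp[OF R1(1) tm_lin2] lin_comp[OF tm_lin2 R1(1)]])
    (simp add: vals assoc)
lemma Rel4: "tm x (Ma1 a y) = Ma1 a (tm x y)"
  by (rule extP2[OF tm_lin1 lin_comp[OF tm_lin1 Ma1(1)] lin_comp[OF Ma1(1) tm_lin2] lin_comp[OF tm_lin2 Ma1(1)]])
    (simp add: vals assoc)
lemma Rel5: "tm (Ma1 a x) y = tm x (L1 a y)"
  by (rule extP2[OF lin_comp[OF Ma1(1) tm_lin1] tm_lin1 tm_lin2 lin_comp[OF L1(1) tm_lin2]])
    (simp add: vals assoc)
lemma Rel6: "tm (R1 c x) y = tm x (M1b c y)"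
  by (rule extP2[OF lin_comp[OF R1(1) tm_lin1] tm_lin1 tm_lin2 lin_comp[OF M1b(1) tm_lin2]])
    (simp add: vals assoc)
lemma Rel7: "M1b p (L1 y z) = tm (tp y p) z"
  by (rule extP[OF lin_comp[OF L1(1) M1b(1)] tm_lin2]) (simp add: vals)
lemma Rel8: "R1 p (Ma1 y x) = tm x (tp y p)"
  by (rule extP[OF lin_comp[OF Ma1(1) R1(1)] tm_lin1]) (simp add: vals)
lemma fl_tm: "fl (tm x y) = tm (fl x) (fl y)"
  by (rule extP2[OF lin_comp[OF tm_lin1 fl(1)] lin_comp[OF fl(1) tm_lin1] lin_comp[OF tm_lin2 fl(1)] lin_comp[OF fl(1) tm_lin2]])
    (simp add: vals)
lemma fl_fl: "fl (fl x) = x"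
  by (rule extP[OF lin_comp[OF fl(1) fl(1)] linT_id]) (simp add: vals)
lemma fl_M1b: "fl (M1b b x) = L1 b (fl x)"
  by (rule extP[OF lin_comp[OF M1b(1) fl(1)] lin_comp[OF fl(1) L1(1)]]) (simp add: vals)
lemma fl_L1: "fl (L1 b x) = M1b b (fl x)"
  by (rule extP[OF lin_comp[OF L1(1) fl(1)] lin_comp[OF fl(1) M1b(1)]]) (simp add: vals)
lemma fl_R1: "fl (R1 b x) = Ma1 b (fl x)"
  by (rule extP[OF lin_comp[OF R1(1) fl(1)] lin_comp[OF fl(1) Ma1(1)]]) (simp add: vals)
lemma fl_Ma1: "fl (Ma1 b x) = R1 b (fl x)"
  by (rule extP[OF lin_comp[OF Ma1(1) fl(1)] lin_comp[OF fl(1) R1(1)]]) (simp add: vals)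
lemma L1_R1: "L1 x (R1 p w) = R1 p (L1 x w)"
  by (rule extP[OF lin_comp[OF R1(1) L1(1)] lin_comp[OF L1(1) R1(1)]]) (simp add: vals)
lemma L1_M1b: "L1 c (M1b b x) = M1b b (L1 c x)"
  by (rule extP[OF lin_comp[OF M1b(1) L1(1)] lin_comp[OF L1(1) M1b(1)]]) (simp add: vals)
lemma R1_Ma1: "R1 p (Ma1 x w) = Ma1 x (R1 p w)"
  by (rule extP[OF lin_comp[OF Ma1(1) R1(1)] lin_comp[OF R1(1) Ma1(1)]]) (simp add: vals)
lemma Ma1_Ma1: "Ma1 u (Ma1 y x) = Ma1 (m y u) x"
  by (rule extP[OF lin_comp[OF Ma1(1) Ma1(1)] Ma1(1)]) (simp add: vals assoc)
lemma L1_L1: "L1 y (L1 u z) = L1 (m y u) z"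
  by (rule extP[OF lin_comp[OF L1(1) L1(1)] L1(1)]) (simp add: vals assoc)
lemma M1b_M1b: "M1b y (M1b u z) = M1b (m y u) z"
  by (rule extP[OF lin_comp[OF M1b(1) M1b(1)] M1b(1)]) (simp add: vals assoc)

end


context tens begin

lemma repr:
  assumes B: "X.independent B" "X.span B = UNIV"
  shows "\<exists>F g. finite F \<and> F \<subseteq> B \<and> z = (\<Sum>b\<in>F. tz b (g b))"
proof -
  have "z \<in> Z.span {tz x y | x y. True}" using spanZ by simp
  then show ?thesis
  proof (induction rule: Z.span_induct_alt)
    case base
    show ?case by (rule exI[of _ "{}"]) auto
  next
    case (step c x y)
    from step(1) obtain x0 y0 where x: "x = tz x0 y0" by auto
    from step(2) obtain F g where F: "finite F" "F \<subseteq> B" "y = (\<Sum>b\<in>F. tz b (g b))" by blast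
    have "x0 \<in> X.span B" using B by auto
    then obtain t r where t: "finite t" "t \<subseteq> B" "x0 = (\<Sum>a\<in>t. sX (r a) a)"
      unfolding X.span_explicit by blast
    define g' where "g' b = (if b \<in> F then g b else 0) + (if b \<in> t then sY (c * r b) y0 else 0)" for b
    have z1: "tz b 0 = 0" for b using lin_0[OF lin2] .
    have e1: "(\<Sum>b\<in>F \<union> t. tz b (if b \<in> F then g b else 0)) = (\<Sum>b\<in>F. tz b (g b))"
    proof -
      have "(\<Sum>b\<in>F \<union> t. tz b (if b \<in> F then g b else 0)) = (\<Sum>b\<in>F \<union> t. if b \<in> F then tz b (g b) else 0)"
        by (intro sum.cong) (auto simp: z1)
      also have "\<dots> = (\<Sum>b\<in>F. tz b (g b))"
        by (rule sum.mono_neutral_cong_right) (use F t in auto)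
      finally show ?thesis .
    qed
    have e2: "(\<Sum>b\<in>F \<union> t. tz b (if b \<in> t then sY (c * r b) y0 else 0)) = sZ c x"
    proof -
      have "(\<Sum>b\<in>F \<union> t. tz b (if b \<in> t then sY (c * r b) y0 else 0)) =
            (\<Sum>b\<in>F \<union> t. if b \<in> t then tz b (sY (c * r b) y0) else 0)"
        by (intro sum.cong) (auto simp: z1)
      also have "\<dots> = (\<Sum>b\<in>t. tz b (sY (c * r b) y0))"
        by (rule sum.mono_neutral_cong_right) (use F t in auto)
      also have "(\<Sum>b\<in>t. tz b (sY (c * r b) y0)) = (\<Sum>b\<in>t. sZ c (sZ (r b) (tz b y0)))"
        by (intro sum.cong refl) (simp add: lin_scale[OF lin2])
      also have "\<dots> = sZ c (\<Sum>b\<in>t. sZ (r b) (tz b y0))"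
        by (simp add: Z.scale_sum_right)
      also have "(\<Sum>b\<in>t. sZ (r b) (tz b y0)) = tz x0 y0"
        unfolding t(3) by (simp add: lin_sum[OF lin1] lin_scale[OF lin1])
      finally show ?thesis using x by simp
    qed
    have "sZ c x + y = (\<Sum>b\<in>F \<union> t. tz b (g' b))"
      unfolding g'_def by (simp add: lin_add[OF lin2] sum.distrib e1 e2 F(3) add.commute)
    then show ?case using F t by (intro exI[of _ "F \<union> t"] exI[of _ g']) auto
  qed
qed

end

lemma functional:
  assumes vs: "vector_space s" and v: "v \<noteq> 0"
  shows "\<exists>\<omega>. Vector_Spaces.linear s (*) \<omega> \<and> \<omega> v = 1"
proof -
  interpret p: vector_space_pair s "(*)" unfolding vector_space_pair_def using vs vs_field by simp
  have "\<not> module.dependent s {v}" using v vector_space.dependent_single[OF vs] by simp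
  from p.linear_independent_extend[OF this, of "\<lambda>_. 1"] show ?thesis by auto
qed


context base begin

lemma basisA: "\<exists>B. P.X.independent B \<and> P.X.span B = UNIV"
proof -
  obtain B where "P.X.independent B" "UNIV \<subseteq> P.X.span B"
    using P.X.basis_exists[of UNIV] by blast
  then show ?thesis by blast
qed

lemma coef0:
  assumes "P.X.independent B" "finite F" "F \<subseteq> B" "(\<Sum>b\<in>F. sA (c b) b) = 0" "b \<in> F"
  shows "c b = 0"
proof -
  have "\<forall>S\<subseteq>B. finite S \<longrightarrow> (\<forall>u. (\<Sum>v\<in>S. sA (u v) v) = 0 \<longrightarrow> (\<forall>v\<in>S. u v = 0))"
    using assms(1) unfolding P.X.independent_explicit_finite_subsets .
  then show ?thesis using assms(2-5) by blast
qed

definition "Pw \<omega> = tlift sT sA tp (\<lambda>u w. sA (\<omega> w) u)"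

lemma Pw:
  assumes w: "Vector_Spaces.linear sA (*) \<omega>"
  shows "Vector_Spaces.linear sT sA (Pw \<omega>)" "Pw \<omega> (tp u v) = sA (\<omega> v) u"
proof -
  have l1: "Vector_Spaces.linear sA sA (\<lambda>u. sA (\<omega> v) u)" for v
    by (rule linI[OF vsA vsA]) (simp_all add: P.X.scale_right_distrib P.X.scale_left_commute)
  have l2: "Vector_Spaces.linear sA sA (\<lambda>v. sA (\<omega> v) u)" for u
    by (rule linI[OF vsA vsA]) (simp_all add: lin_add[OF w] lin_scale[OF w] P.X.scale_left_distrib)
  show "Vector_Spaces.linear sT sA (Pw \<omega>)" "Pw \<omega> (tp u v) = sA (\<omega> v) u"
    unfolding Pw_def by (rule tlP[OF vsA l1 l2])+
qed

lemma nondeg_r: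
  assumes h: "\<And>a b. tm y (tp a b) = 0"
  shows "y = 0"
proof -
  obtain B where B: "P.X.independent B" "P.X.span B = UNIV" using basisA by blast
  obtain F g where F: "finite F" "F \<subseteq> B" "y = (\<Sum>b\<in>F. tp b (g b))"
    using P.repr[OF B] by blast
  have gz: "g b0 = 0" if b0: "b0 \<in> F" for b0
  proof (rule nd1)
    fix d
    show "m (g b0) d = 0"
    proof (rule ccontr)
      assume v: "m (g b0) d \<noteq> 0"
      obtain \<omega> where w: "Vector_Spaces.linear sA (*) \<omega>" "\<omega> (m (g b0) d) = 1"
        using functional[OF vsA v] by blast
      have "m (\<Sum>b\<in>F. sA (\<omega> (m (g b) d)) b) a = 0" for a
      proof -
        have "0 = Pw \<omega> (tm y (tp a d))" using h lin_0[OF Pw(1)[OF w(1)]] by simp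
        also have "tm y (tp a d) = (\<Sum>b\<in>F. tp (m b a) (m (g b) d))"
          unfolding F(3) by (simp add: lin_sum[OF tm_lin1] tm_tp)
        also have "Pw \<omega> \<dots> = (\<Sum>b\<in>F. sA (\<omega> (m (g b) d)) (m b a))"
          by (simp add: lin_sum[OF Pw(1)[OF w(1)]] Pw(2)[OF w(1)])
        also have "\<dots> = m (\<Sum>b\<in>F. sA (\<omega> (m (g b) d)) b) a"
          by (simp add: lin_sum[OF ml1] lin_scale[OF ml1])
        finally show ?thesis by simp
      qed
      then have "(\<Sum>b\<in>F. sA (\<omega> (m (g b) d)) b) = 0" by (rule nd1)
      then have "\<omega> (m (g b0) d) = 0" by (rule coef0[OF B(1) F(1) F(2) _ b0])
      then show False using w by simp
    qed
  qed
  show ?thesis unfolding F(3) using gz by (simp add: lin_0[OF tp_lin2])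
qed

lemma nondeg_l:
  assumes h: "\<And>a b. tm (tp a b) y = 0"
  shows "y = 0"
proof -
  obtain B where B: "P.X.independent B" "P.X.span B = UNIV" using basisA by blast
  obtain F g where F: "finite F" "F \<subseteq> B" "y = (\<Sum>b\<in>F. tp b (g b))"
    using P.repr[OF B] by blast
  have gz: "g b0 = 0" if b0: "b0 \<in> F" for b0
  proof (rule nd2)
    fix d
    show "m d (g b0) = 0"
    proof (rule ccontr)
      assume v: "m d (g b0) \<noteq> 0"
      obtain \<omega> where w: "Vector_Spaces.linear sA (*) \<omega>" "\<omega> (m d (g b0)) = 1"
        using functional[OF vsA v] by blast
      have "m a (\<Sum>b\<in>F. sA (\<omega> (m d (g b))) b) = 0" for a
      proof -
        have "0 = Pw \<omega> (tm (tp a d) y)" using h lin_0[OF Pw(1)[OF w(1)]] by simp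
        also have "tm (tp a d) y = (\<Sum>b\<in>F. tp (m a b) (m d (g b)))"
          unfolding F(3) by (simp add: lin_sum[OF tm_lin2] tm_tp)
        also have "Pw \<omega> \<dots> = (\<Sum>b\<in>F. sA (\<omega> (m d (g b))) (m a b))"
          by (simp add: lin_sum[OF Pw(1)[OF w(1)]] Pw(2)[OF w(1)])
        also have "\<dots> = m a (\<Sum>b\<in>F. sA (\<omega> (m d (g b))) b)"
          by (simp add: lin_sum[OF ml2] lin_scale[OF ml2])
        finally show ?thesis by simp
      qed
      then have "(\<Sum>b\<in>F. sA (\<omega> (m d (g b))) b) = 0" by (rule nd2)
      then have "\<omega> (m d (g b0)) = 0" by (rule coef0[OF B(1) F(1) F(2) _ b0])
      then show False using w by simp
    qed
  qed
  show ?thesis unfolding F(3) using gz by (simp add: lin_0[OF tp_lin2])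
qed

lemma cancel_r:
  assumes "\<And>x. tm y x = tm y' x"
  shows "y = y'"
proof -
  have "tm (y - y') (tp a b) = 0" for a b
    using assms by (simp add: lin_diff[OF tm_lin1])
  then have "y - y' = 0" by (rule nondeg_r)
  then show ?thesis by simp
qed

lemma cancel_l:
  assumes "\<And>x. tm x y = tm x y'"
  shows "y = y'"
proof -
  have "tm (tp a b) (y - y') = 0" for a b
    using assms by (simp add: lin_diff[OF tm_lin2])
  then have "y - y' = 0" by (rule nondeg_l)
  then show ?thesis by simp
qed

lemma cancelA_r: "(\<And>x. m y x = m y' x) \<Longrightarrow> y = y'"
proof -
  assume a: "\<And>x. m y x = m y' x"
  have "m (y - y') x = 0" for x using a by (simp add: lin_diff[OF ml1])
  then have "y - y' = 0" by (rule nd1)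
  then show ?thesis by simp
qed

lemma cancelA_l: "(\<And>x. m x y = m x y') \<Longrightarrow> y = y'"
proof -
  assume a: "\<And>x. m x y = m x y'"
  have "m x (y - y') = 0" for x using a by (simp add: lin_diff[OF ml2])
  then have "y - y' = 0" by (rule nd2)
  then show ?thesis by simp
qed

end


locale hs =
  fixes sA :: "'k::field \<Rightarrow> 'a::ab_group_add \<Rightarrow> 'a"
    and sT :: "'k \<Rightarrow> 't::ab_group_add \<Rightarrow> 't"
    and sU :: "'k \<Rightarrow> 'u::ab_group_add \<Rightarrow> 'u"
    and m :: "'a \<Rightarrow> 'a \<Rightarrow> 'a"
    and tp :: "'a \<Rightarrow> 'a \<Rightarrow> 't" and tq :: "'a \<Rightarrow> 't \<Rightarrow> 'u"
    and DL DR :: "'a \<Rightarrow> 't \<Rightarrow> 't" and e :: "'a \<Rightarrow> 'k"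
  assumes G: "gmhc sA sT sU m tp tq DL DR e"
begin

lemma G_conj: "(vector_space sA) \<and>
  ((\<forall>b. Vector_Spaces.linear sA sA (\<lambda>a. m a b))) \<and>
  ((\<forall>a. Vector_Spaces.linear sA sA (m a))) \<and>
  ((\<forall>a b c. m (m a b) c = m a (m b c))) \<and>
  ((\<forall>a. (\<forall>b. m a b = 0) \<longrightarrow> a = 0)) \<and>
  ((\<forall>a. (\<forall>b. m b a = 0) \<longrightarrow> a = 0)) \<and>
  (is_tensor sA sA sT tp) \<and>
  (is_tensor sA sT sU tq) \<and>
  ((\<forall>a. Vector_Spaces.linear sT sT (DL a) \<and> Vector_Spaces.linear sT sT (DR a) \<and>
          (\<forall>x y. tmul sT tp m (DR a x) y = tmul sT tp m x (DL a y)))) \<and>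
  ((\<forall>x. Vector_Spaces.linear sA sT (\<lambda>a. DL a x) \<and> Vector_Spaces.linear sA sT (\<lambda>a. DR a x))) \<and>
  ((\<forall>a b. DL (m a b) = DL a \<circ> DL b \<and> DR (m a b) = DR b \<circ> DR a)) \<and>
  ((\<forall>a b. \<exists>y. \<forall>x. tmul sT tp m y x = DL a (mul_1b sT tp m b x))) \<and>
  ((\<forall>a b. \<exists>y. \<forall>x. tmul sT tp m x y = DR b (mul_a1 sT tp m a x))) \<and>
  (Vector_Spaces.linear sA (*) e) \<and>
  ((\<forall>a b. epsI sA sT tp e (gT1 sT tp m DL (tp a b)) = m a b)) \<and>
  ((\<forall>a b. Ieps sA sT tp e (gT2 sT tp m DR (tp a b)) = m a b)) \<and>
  (bij (gT1 sT tp m DL)) \<and>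
  (bij (gT2 sT tp m DR)) \<and>
  ((\<forall>c a b. lmul_c1 sT tp m c (inv (gT1 sT tp m DL) (tp a b)) =
        idF sT sU tp tq (epsI sA sT tp e \<circ> inv (gT1 sT tp m DL))
          (assoc_l sT sU tp tq (gT2 sT tp m DR (tp c a)) b))) \<and>
  ((\<forall>c a b. rmul_1c sT tp m c (inv (gT2 sT tp m DR) (tp a b)) =
        Fid sT sU tp tq (Ieps sA sT tp e \<circ> inv (gT2 sT tp m DR))
          (tq a (gT1 sT tp m DL (tp b c)))))"
  using G unfolding gmhc_def .

lemmas G_all = G_conj[THEN conjunct1]
  G_conj[THEN conjunct2, THEN conjunct1]
  G_conj[THEN conjunct2, THEN conjunct2, THEN conjunct1]
  G_conj[THEN conjunct2, THEN conjunct2, THEN conjunct2, THEN conjunct1]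
  G_conj[THEN conjunct2, THEN conjunct2, THEN conjunct2, THEN conjunct2, THEN conjunct1]
  G_conj[THEN conjunct2, THEN conjunct2, THEN conjunct2, THEN conjunct2, THEN conjunct2, THEN conjunct1]
  G_conj[THEN conjunct2, THEN conjunct2, THEN conjunct2, THEN conjunct2, THEN conjunct2, THEN conjunct2, THEN conjunct1]
  G_conj[THEN conjunct2, THEN conjunct2, THEN conjunct2, THEN conjunct2, THEN conjunct2, THEN conjunct2, THEN conjunct2, THEN conjunct1]
  G_conj[THEN conjunct2, THEN conjunct2, THEN conjunct2, THEN conjunct2, THEN conjunct2, THEN conjunct2, THEN conjunct2, THEN conjunct2, THEN conjunct1]
  G_conj[THEN conjunct2, THEN conjunct2, THEN conjunct2, THEN conjunct2, THEN conjunct2, THEN conjunct2, THEN conjunct2, THEN conjunct2, THEN conjunct2, THEN conjunct1]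
  G_conj[THEN conjunct2, THEN conjunct2, THEN conjunct2, THEN conjunct2, THEN conjunct2, THEN conjunct2, THEN conjunct2, THEN conjunct2, THEN conjunct2, THEN conjunct2, THEN conjunct1]
  G_conj[THEN conjunct2, THEN conjunct2, THEN conjunct2, THEN conjunct2, THEN conjunct2, THEN conjunct2, THEN conjunct2, THEN conjunct2, THEN conjunct2, THEN conjunct2, THEN conjunct2, THEN conjunct1]
  G_conj[THEN conjunct2, THEN conjunct2, THEN conjunct2, THEN conjunct2, THEN conjunct2, THEN conjunct2, THEN conjunct2, THEN conjunct2, THEN conjunct2, THEN conjunct2, THEN conjunct2, THEN conjunct2, THEN conjunct1]
  G_conj[THEN conjunct2, THEN conjunct2, THEN conjunct2, THEN conjunct2, THEN conjunct2, THEN conjunct2, THEN conjunct2, THEN conjunct2, THEN conjunct2, THEN conjunct2, THEN conjunct2, THEN conjunct2, THEN conjunct2, THEN conjunct1]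
  G_conj[THEN conjunct2, THEN conjunct2, THEN conjunct2, THEN conjunct2, THEN conjunct2, THEN conjunct2, THEN conjunct2, THEN conjunct2, THEN conjunct2, THEN conjunct2, THEN conjunct2, THEN conjunct2, THEN conjunct2, THEN conjunct2, THEN conjunct1]
  G_conj[THEN conjunct2, THEN conjunct2, THEN conjunct2, THEN conjunct2, THEN conjunct2, THEN conjunct2, THEN conjunct2, THEN conjunct2, THEN conjunct2, THEN conjunct2, THEN conjunct2, THEN conjunct2, THEN conjunct2, THEN conjunct2, THEN conjunct2, THEN conjunct1]
  G_conj[THEN conjunct2, THEN conjunct2, THEN conjunct2, THEN conjunct2, THEN conjunct2, THEN conjunct2, THEN conjunct2, THEN conjunct2, THEN conjunct2, THEN conjunct2, THEN conjunct2, THEN conjunct2, THEN conjunct2, THEN conjunct2, THEN conjunct2, THEN conjunct2, THEN conjunct1]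
  G_conj[THEN conjunct2, THEN conjunct2, THEN conjunct2, THEN conjunct2, THEN conjunct2, THEN conjunct2, THEN conjunct2, THEN conjunct2, THEN conjunct2, THEN conjunct2, THEN conjunct2, THEN conjunct2, THEN conjunct2, THEN conjunct2, THEN conjunct2, THEN conjunct2, THEN conjunct2, THEN conjunct1]
  G_conj[THEN conjunct2, THEN conjunct2, THEN conjunct2, THEN conjunct2, THEN conjunct2, THEN conjunct2, THEN conjunct2, THEN conjunct2, THEN conjunct2, THEN conjunct2, THEN conjunct2, THEN conjunct2, THEN conjunct2, THEN conjunct2, THEN conjunct2, THEN conjunct2, THEN conjunct2, THEN conjunct2, THEN conjunct1]
  G_conj[THEN conjunct2, THEN conjunct2, THEN conjunct2, THEN conjunct2, THEN conjunct2, THEN conjunct2, THEN conjunct2, THEN conjunct2, THEN conjunct2, THEN conjunct2, THEN conjunct2, THEN conjunct2, THEN conjunct2, THEN conjunct2, THEN conjunct2, THEN conjunct2, THEN conjunct2, THEN conjunct2, THEN conjunct2]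

sublocale base sA sT sU m tp tq
proof (rule base.intro)
  show "\<And>b. Vector_Spaces.linear sA sA (\<lambda>a. m a b)" using G_all(2) by blast
  show "\<And>a. Vector_Spaces.linear sA sA (m a)" using G_all(3) by blast
  show "\<And>a b c. m (m a b) c = m a (m b c)" using G_all(4) by blast
  show "\<And>a. (\<And>b. m a b = 0) \<Longrightarrow> a = 0" using G_all(5) by blast
  show "\<And>a. (\<And>b. m b a = 0) \<Longrightarrow> a = 0" using G_all(6) by blast
  show "is_tensor sA sA sT tp" by (rule G_all(7))
  show "is_tensor sA sT sU tq" by (rule G_all(8))
qed

abbreviation "T1 \<equiv> gT1 sT tp m DL"
abbreviation "T2 \<equiv> gT2 sT tp m DR"
abbreviation "iT1 \<equiv> inv T1"
abbreviation "iT2 \<equiv> inv T2"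
abbreviation "E1 \<equiv> epsI sA sT tp e"
abbreviation "E2 \<equiv> Ieps sA sT tp e"
abbreviation "S \<equiv> gS sA sT tp m DL e"

lemma DL_lin: "Vector_Spaces.linear sT sT (DL a)" and DR_lin: "Vector_Spaces.linear sT sT (DR a)"
  and compat: "tm (DR a x) y = tm x (DL a y)"
  using G_all(9) by auto
lemma DL_la: "Vector_Spaces.linear sA sT (\<lambda>a. DL a x)" and DR_la: "Vector_Spaces.linear sA sT (\<lambda>a. DR a x)"
  using G_all(10) by auto
lemma DL_m: "DL (m a b) x = DL a (DL b x)" and DR_m: "DR (m a b) x = DR b (DR a x)"
  using G_all(11) by auto
lemma e_lin: "Vector_Spaces.linear sA (*) e" by (rule G_all(14))
lemma bij1: "bij T1" and bij2: "bij T2" using G_all(17,18) by auto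

lemma DR_tm: "DR a (tm x y) = tm x (DR a y)"
proof (rule cancel_r)
  fix w
  show "tm (DR a (tm x y)) w = tm (tm x (DR a y)) w"
    by (simp add: compat tm_assoc)
qed

lemma DL_tm: "DL a (tm x y) = tm (DL a x) y"
proof (rule cancel_l)
  fix w
  show "tm w (DL a (tm x y)) = tm w (tm (DL a x) y)"
    by (simp add: compat[symmetric] tm_assoc[symmetric])
qed

lemma E1: "Vector_Spaces.linear sT sA E1" "E1 (tp c d) = sA (e c) d"
proof -
  have l1: "Vector_Spaces.linear sA sA (\<lambda>c. sA (e c) d)" for d
    by (rule linI[OF vsA vsA]) (simp_all add: lin_add[OF e_lin] lin_scale[OF e_lin] P.X.scale_left_distrib)
  have l2: "Vector_Spaces.linear sA sA (\<lambda>d. sA (e c) d)" for c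
    by (rule linI[OF vsA vsA]) (simp_all add: P.X.scale_right_distrib P.X.scale_left_commute)
  show "Vector_Spaces.linear sT sA E1" "E1 (tp c d) = sA (e c) d"
    unfolding epsI_def by (rule tlP[OF vsA l1 l2])+
qed

lemma E2: "Vector_Spaces.linear sT sA E2" "E2 (tp c d) = sA (e d) c"
proof -
  have l1: "Vector_Spaces.linear sA sA (\<lambda>c. sA (e d) c)" for d
    by (rule linI[OF vsA vsA]) (simp_all add: P.X.scale_right_distrib P.X.scale_left_commute)
  have l2: "Vector_Spaces.linear sA sA (\<lambda>d. sA (e d) c)" for c
    by (rule linI[OF vsA vsA]) (simp_all add: lin_add[OF e_lin] lin_scale[OF e_lin] P.X.scale_left_distrib)
  show "Vector_Spaces.linear sT sA E2" "E2 (tp c d) = sA (e d) c"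
    unfolding Ieps_def by (rule tlP[OF vsA l1 l2])+
qed

definition "h1 a b = (THE y. \<forall>x. tm y x = DL a (M1b b x))"
definition "h2 a b = (THE y. \<forall>x. tm x y = DR b (Ma1 a x))"

lemma h1: "tm (h1 a b) x = DL a (M1b b x)"
proof -
  obtain y where y: "\<forall>x. tm y x = DL a (M1b b x)" using G_all(12) by blast
  have "\<exists>!y. \<forall>x. tm y x = DL a (M1b b x)"
    by (rule ex1I[of _ y]) (use y cancel_r in auto)
  from theI'[OF this] show ?thesis unfolding h1_def by blast
qed

lemma h2: "tm x (h2 a b) = DR b (Ma1 a x)"
proof -
  obtain y where y: "\<forall>x. tm x y = DR b (Ma1 a x)" using G_all(13) by blast
  have "\<exists>!y. \<forall>x. tm x y = DR b (Ma1 a x)"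
    by (rule ex1I[of _ y]) (use y cancel_l in auto)
  from theI'[OF this] show ?thesis unfolding h2_def by blast
qed

lemma h1_l1: "Vector_Spaces.linear sA sT (\<lambda>a. h1 a b)"
proof (rule linI[OF vsA vsT])
  fix a a' c
  show "h1 (a + a') b = h1 a b + h1 a' b"
    by (rule cancel_r) (simp add: h1 lin_add[OF tm_lin1] lin_add[OF DL_la])
  show "h1 (sA c a) b = sT c (h1 a b)"
    by (rule cancel_r) (simp add: h1 lin_scale[OF tm_lin1] lin_scale[OF DL_la])
qed

lemma h1_l2: "Vector_Spaces.linear sA sT (\<lambda>b. h1 a b)"
proof (rule linI[OF vsA vsT])
  fix b b' c
  show "h1 a (b + b') = h1 a b + h1 a b'"
    by (rule cancel_r) (simp add: h1 lin_add[OF tm_lin1] lin_add[OF M1b_lb] lin_add[OF DL_lin])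
  show "h1 a (sA c b) = sT c (h1 a b)"
    by (rule cancel_r) (simp add: h1 lin_scale[OF tm_lin1] lin_scale[OF M1b_lb] lin_scale[OF DL_lin])
qed

lemma h2_l1: "Vector_Spaces.linear sA sT (\<lambda>a. h2 a b)"
proof (rule linI[OF vsA vsT])
  fix a a' c
  show "h2 (a + a') b = h2 a b + h2 a' b"
    by (rule cancel_l) (simp add: h2 lin_add[OF tm_lin2] lin_add[OF Ma1_lb] lin_add[OF DR_lin])
  show "h2 (sA c a) b = sT c (h2 a b)"
    by (rule cancel_l) (simp add: h2 lin_scale[OF tm_lin2] lin_scale[OF Ma1_lb] lin_scale[OF DR_lin])
qed

lemma h2_l2: "Vector_Spaces.linear sA sT (\<lambda>b. h2 a b)"
proof (rule linI[OF vsA vsT])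
  fix b b' c
  show "h2 a (b + b') = h2 a b + h2 a b'"
    by (rule cancel_l) (simp add: h2 lin_add[OF tm_lin2] lin_add[OF DR_la])
  show "h2 a (sA c b) = sT c (h2 a b)"
    by (rule cancel_l) (simp add: h2 lin_scale[OF tm_lin2] lin_scale[OF DR_la])
qed

lemma T1: "Vector_Spaces.linear sT sT T1" "T1 (tp a b) = h1 a b"
  unfolding gT1_def h1_def[symmetric] by (rule tlP[OF vsT h1_l1 h1_l2])+

lemma T2: "Vector_Spaces.linear sT sT T2" "T2 (tp a b) = h2 a b"
  unfolding gT2_def h2_def[symmetric] by (rule tlP[OF vsT h2_l1 h2_l2])+

lemma T1c: "tm (T1 (tp a b)) x = DL a (M1b b x)" by (simp add: T1 h1)
lemma T2c: "tm x (T2 (tp a b)) = DR b (Ma1 a x)" by (simp add: T2 h2)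

lemma iT1: "Vector_Spaces.linear sT sT iT1" "T1 (iT1 z) = z" "iT1 (T1 z) = z"
  using lin_inv[OF T1(1) bij1] bij1 by (auto simp: bij_is_surj bij_is_inj surj_f_inv_f)
lemma iT2: "Vector_Spaces.linear sT sT iT2" "T2 (iT2 z) = z" "iT2 (T2 z) = z"
  using lin_inv[OF T2(1) bij2] bij2 by (auto simp: bij_is_surj bij_is_inj surj_f_inv_f)

lemma cou1: "E1 (T1 z) = mu z"
  by (rule extP[OF lin_comp[OF T1(1) E1(1)] mu(1)]) (use G_all(15) in \<open>simp add: mu(2)\<close>)
lemma cou2: "E2 (T2 z) = mu z"
  by (rule extP[OF lin_comp[OF T2(1) E2(1)] mu(1)]) (use G_all(16) in \<open>simp add: mu(2)\<close>)

lemma mu_iT1: "mu (iT1 z) = E1 z" using cou1[of "iT1 z"] iT1 by simp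
lemma mu_iT2: "mu (iT2 z) = E2 z" using cou2[of "iT2 z"] iT2 by simp

lemma S_def': "S a b = E1 (iT1 (tp a b))" by (simp add: gS_def)
lemma S_l2: "Vector_Spaces.linear sA sA (S a)"
  unfolding S_def' by (rule lin_comp[OF lin_comp[OF tp_lin2 iT1(1)] E1(1)])
lemma S_l1: "Vector_Spaces.linear sA sA (\<lambda>a. S a b)"
  unfolding S_def' by (rule lin_comp[OF lin_comp[OF tp_lin1 iT1(1)] E1(1)])

end


context hs begin

definition "AL z b = assoc_l sT sU tp tq z b"

lemma AL: "Vector_Spaces.linear sT sU (\<lambda>z. AL z b)" "AL (tp u v) b = tq u (tp v b)"
  unfolding AL_def assoc_l_def
  by (rule tlP[OF vsU tq_lin1 lin_comp[OF tp_lin1 tq_lin2]])+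

lemma idF:
  assumes F: "Vector_Spaces.linear sT sA F"
  shows "Vector_Spaces.linear sU sT (idF sT sU tp tq F)" "idF sT sU tp tq F (tq x w) = tp x (F w)"
  unfolding idF_def by (rule tlQ[OF vsT tp_lin1 lin_comp[OF F tp_lin2]])+

definition "inF G x = tlift sT sT tp (\<lambda>y z. tp (G (tp x y)) z)"

lemma inF:
  assumes G: "Vector_Spaces.linear sT sA G"
  shows "Vector_Spaces.linear sT sT (inF G x)" "inF G x (tp y z) = tp (G (tp x y)) z"
  unfolding inF_def by (rule tlP[OF vsT lin_comp[OF lin_comp[OF tp_lin2 G] tp_lin1] tp_lin2])+

lemma inF_l:
  assumes G: "Vector_Spaces.linear sT sA G"
  shows "Vector_Spaces.linear sA sT (\<lambda>x. inF G x w)"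
  by (rule param_lin[OF vsT vsA inF(1)[OF G]])
    (simp add: inF(2)[OF G] lin_comp[OF lin_comp[OF tp_lin1 G] tp_lin1])

lemma Fid:
  assumes G: "Vector_Spaces.linear sT sA G"
  shows "Vector_Spaces.linear sU sT (Fid sT sU tp tq G)" "Fid sT sU tp tq G (tq x w) = inF G x w"
  unfolding Fid_def inF_def[symmetric] by (rule tlQ[OF vsT inF_l[OF G] inF(1)[OF G]])+

lemma E1iT1: "Vector_Spaces.linear sT sA (E1 \<circ> iT1)"
  using lin_comp[OF iT1(1) E1(1)] by (simp add: o_def)
lemma E2iT2: "Vector_Spaces.linear sT sA (E2 \<circ> iT2)"
  using lin_comp[OF iT2(1) E2(1)] by (simp add: o_def)

definition "K b z = idF sT sU tp tq (E1 \<circ> iT1) (AL z b)"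
definition "J a z = Fid sT sU tp tq (E2 \<circ> iT2) (tq a z)"

lemma K: "Vector_Spaces.linear sT sT (K b)" "K b (tp u v) = tp u (S v b)"
  unfolding K_def
   apply (rule lin_comp[OF AL(1) idF(1)[OF E1iT1]])
  by (simp add: AL(2) idF(2)[OF E1iT1] S_def')

lemma J: "Vector_Spaces.linear sT sT (J a)" "J a (tp u v) = tp (E2 (iT2 (tp a u))) v"
  unfolding J_def Fid(2)[OF E2iT2] by (simp_all add: inF[OF E2iT2])

lemma AX1: "L1 c (iT1 (tp a b)) = K b (T2 (tp c a))"
  using G_all(19) unfolding K_def AL_def by blast

lemma AX2: "R1 c (iT2 (tp a b)) = J a (T1 (tp b c))"
  using G_all(20) unfolding J_def by blast

definition "Rp y a = E2 (iT2 (tp y a))"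

lemma mu_L1: "mu (L1 u Y) = m u (mu Y)"
  by (rule extP[OF lin_comp[OF L1(1) mu(1)] lin_comp[OF mu(1) ml2]]) (simp add: vals assoc)

lemma mu_R1: "mu (R1 u Y) = m (mu Y) u"
  by (rule extP[OF lin_comp[OF R1(1) mu(1)] lin_comp[OF mu(1) ml1]]) (simp add: vals assoc)

lemma mu_Ma1: "mu (Ma1 u Y) = mu (M1b u Y)"
  by (rule extP[OF lin_comp[OF Ma1(1) mu(1)] lin_comp[OF M1b(1) mu(1)]]) (simp add: vals assoc)

lemma muK: "mu (K x (T2 z)) = m (E2 z) x"
proof (rule extP[OF lin_comp[OF lin_comp[OF T2(1) K(1)] mu(1)] lin_comp[OF E2(1) ml1]])
  fix p q
  have "mu (K x (T2 (tp p q))) = mu (L1 p (iT1 (tp q x)))" by (simp add: AX1)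
  also have "\<dots> = m p (sA (e q) x)" by (simp add: mu_L1 mu_iT1 E1(2))
  also have "\<dots> = m (E2 (tp p q)) x" by (simp add: E2(2) lin_scale[OF ml2] lin_scale[OF ml1])
  finally show "mu (K x (T2 (tp p q))) = m (E2 (tp p q)) x" .
qed

lemma S_Rp: "m y (S a x) = m (Rp y a) x"
proof -
  have "m y (S a x) = mu (K x (tp y a))" by (simp add: K(2) mu(2))
  also have "\<dots> = mu (K x (T2 (iT2 (tp y a))))" by (simp add: iT2(2))
  also have "\<dots> = m (Rp y a) x" by (simp add: muK Rp_def)
  finally show ?thesis .
qed

text \<open>multiplicativity of the counit and antimultiplicativity of S\<close>

lemma T1_L1: "T1 (L1 u Y) = DL u (T1 Y)"
proof (rule extP[OF lin_comp[OF L1(1) T1(1)] lin_comp[OF T1(1) DL_lin]])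
  fix p q
  show "T1 (L1 u (tp p q)) = DL u (T1 (tp p q))"
    by (rule cancel_r) (simp add: L1(2) T1c DL_m DL_tm[symmetric])
qed

lemma Ma1_T1: "Ma1 b (T1 (tp u v)) = DL u (tp b v)"
  by (rule cancel_r) (simp add: Rel5 T1c Rel7 DL_tm)

definition "Th b = tlift sT sT tp (\<lambda>u v. L1 u (iT1 (tp b v)))"

lemma Th: "Vector_Spaces.linear sT sT (Th b)" "Th b (tp u v) = L1 u (iT1 (tp b v))"
  unfolding Th_def by (rule tlP[OF vsT L1_lb lin_comp[OF lin_comp[OF tp_lin2 iT1(1)] L1(1)]])+

lemma T1_Th: "T1 (Th b W) = Ma1 b (T1 W)"
  by (rule extP[OF lin_comp[OF Th(1) T1(1)] lin_comp[OF T1(1) Ma1(1)]])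
    (simp add: Th(2) T1_L1 iT1(2) Ma1_T1)

lemma iT1_m: "iT1 (tp (m a b) x) = Th b (iT1 (tp a x))"
proof -
  have "T1 (Th b (iT1 (tp a x))) = tp (m a b) x" by (simp add: T1_Th iT1(2) Ma1(2))
  then show ?thesis using iT1(3) by metis
qed

lemma mu_Th: "mu (Th b W) = sA (e b) (mu W)"
  by (rule extP[OF lin_comp[OF Th(1) mu(1)] lin_scalef[OF mu(1)]])
    (simp add: Th(2) mu_L1 mu_iT1 E1(2) lin_scale[OF ml2] mu(2))

lemma e_mult: "e (m a b) = e a * e b"
proof (cases "\<exists>x::'a. x \<noteq> 0")
  case True
  then obtain x :: 'a where x: "x \<noteq> 0" by blast
  have "sA (e (m a b)) x = E1 (tp (m a b) x)" by (simp add: E1(2))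
  also have "\<dots> = mu (Th b (iT1 (tp a x)))" by (simp add: mu_iT1[symmetric] iT1_m)
  also have "\<dots> = sA (e b) (sA (e a) x)" by (simp add: mu_Th mu_iT1 E1(2))
  also have "\<dots> = sA (e a * e b) x" by (simp add: mult.commute)
  finally show ?thesis using x by simp
next
  case False
  then have "a = 0" by blast
  then show ?thesis by (simp add: lin_0[OF e_lin] lin_0[OF ml1])
qed

lemma E1_L1: "E1 (L1 u Y) = sA (e u) (E1 Y)"
  by (rule extP[OF lin_comp[OF L1(1) E1(1)] lin_scalef[OF E1(1)]]) (simp add: L1(2) E1(2) e_mult)

lemma E1_Th: "E1 (Th b W) = S b (E1 W)"
  by (rule extP[OF lin_comp[OF Th(1) E1(1)] lin_comp[OF E1(1) S_l2]])
    (simp add: Th(2) E1_L1 E1(2) S_def'[symmetric] lin_scale[OF S_l2])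

lemma S_anti: "S (m a b) x = S b (S a x)"
  by (simp add: S_def' iT1_m E1_Th)

end


context base begin
lemma copL_copL: "copL sT tp (copL sT tp D) = D"
  by (intro ext) (simp add: copL_def fl_fl)
end

context hs begin
lemma E2_L1: "E2 (L1 y z) = m y (E2 z)"
  by (rule extP[OF lin_comp[OF L1(1) E2(1)] lin_comp[OF E2(1) ml2]]) (simp add: vals E2(2) lin_scale[OF ml2])
lemma E2_Ma1: "E2 (Ma1 b z) = m (E2 z) b"
  by (rule extP[OF lin_comp[OF Ma1(1) E2(1)] lin_comp[OF E2(1) ml1]]) (simp add: vals E2(2) lin_scale[OF ml1])
lemma E2_fl: "E2 (fl z) = E1 z"
  by (rule extP[OF lin_comp[OF fl(1) E2(1)] E1(1)]) (simp add: vals E2(2) E1(2))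
lemma E2_M1b: "E2 (M1b p V) = sA (e p) (E2 V)"
  by (rule extP[OF lin_comp[OF M1b(1) E2(1)] lin_scalef[OF E2(1)]]) (simp add: vals E2(2) e_mult mult.commute)
end

locale pr = hs sA sT sU m tp tq DL DR e
  for sA :: "'k::field \<Rightarrow> 'a::ab_group_add \<Rightarrow> 'a"
    and sT :: "'k \<Rightarrow> 't::ab_group_add \<Rightarrow> 't"
    and sU :: "'k \<Rightarrow> 'u::ab_group_add \<Rightarrow> 'u"
    and m :: "'a \<Rightarrow> 'a \<Rightarrow> 'a"
    and tp :: "'a \<Rightarrow> 'a \<Rightarrow> 't" and tq :: "'a \<Rightarrow> 't \<Rightarrow> 'u"
    and DL DR :: "'a \<Rightarrow> 't \<Rightarrow> 't" and e :: "'a \<Rightarrow> 'k" +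
  fixes e' :: "'a \<Rightarrow> 'k"
  assumes C: "gmhc sA sT sU m tp tq (copL sT tp DL) (copL sT tp DR) e'"
    and nt: "\<exists>x::'a. x \<noteq> 0"
begin

sublocale c: hs sA sT sU m tp tq "copL sT tp DL" "copL sT tp DR" e'
  by (rule hs.intro[OF C])

abbreviation "T3 z \<equiv> fl (c.T2 z)"
abbreviation "T4 z \<equiv> fl (c.T1 z)"

lemma T3_lin: "Vector_Spaces.linear sT sT (\<lambda>z. T3 z)" by (rule lin_comp[OF c.T2(1) fl(1)])
lemma T4_lin: "Vector_Spaces.linear sT sT (\<lambda>z. T4 z)" by (rule lin_comp[OF c.T1(1) fl(1)])

lemma fl_tm2: "tm x (fl y) = fl (tm (fl x) y)" by (simp add: fl_tm fl_fl)
lemma fl_tm1: "tm (fl y) x = fl (tm y (fl x))" by (simp add: fl_tm fl_fl)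

lemma T3c: "tm x (T3 (tp p q)) = DR q (R1 p x)"
  by (simp add: fl_tm2 c.T2c copL_def fl_fl fl_Ma1)

lemma T4c: "tm (T4 (tp a b)) y = DL a (L1 b y)"
  by (simp add: fl_tm1 c.T1c copL_def fl_fl fl_M1b)

lemma c_T1: "c.T1 z = fl (T4 z)" by (simp add: fl_fl)
lemma c_T2: "c.T2 z = fl (T3 z)" by (simp add: fl_fl)

lemma T2_tm: "tm (T2 (tp c a)) w = L1 c (DL a w)"
  by (rule cancel_l) (simp add: tm_assoc[symmetric] T2c compat Rel5)

lemma P1: "Ma1 b (T2 (tp c a)) = L1 c (T4 (tp a b))"
  by (rule cancel_r) (simp add: Rel5 T2_tm Rel2 T4c)

lemma e_eq: "e' = e"
proof -
  have eq1: "E2 (Ma1 b z) = c.E2 (Ma1 b z)" for b z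
  proof -
    have "E2 (Ma1 b (T2 w)) = c.E2 (Ma1 b (T2 w))" for w
    proof (rule extP[OF lin_comp[OF lin_comp[OF T2(1) Ma1(1)] E2(1)] lin_comp[OF lin_comp[OF T2(1) Ma1(1)] c.E2(1)]])
      fix c a
      have "E2 (Ma1 b (T2 (tp c a))) = m (m c a) b" by (simp add: E2_Ma1 cou2 mu(2))
      moreover have "c.E2 (Ma1 b (T2 (tp c a))) = m c (m a b)"
        by (simp add: P1 c.E2_L1 c.E2_fl c.cou1 mu(2))
      ultimately show "E2 (Ma1 b (T2 (tp c a))) = c.E2 (Ma1 b (T2 (tp c a)))" by (simp add: assoc)
    qed
    from this[of "iT2 z"] show ?thesis by (simp add: iT2(2))
  qed
  show ?thesis
  proof
    fix v
    show "e' v = e v"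
    proof (rule ccontr)
      assume ne: "e' v \<noteq> e v"
      have mz: "m u b = 0" for u b
        using eq1[of b "tp u v"] ne by (simp add: Ma1(2) E2(2) c.E2(2))
      have "(u::'a) = 0" for u by (rule nd1) (rule mz)
      then have "v = 0" by blast
      then show False using ne lin_0[OF e_lin] lin_0[OF c.e_lin] by simp
    qed
  qed
qed

text \<open>The element f(a) representing S(a)\<close>

lemma T2_R1: "T2 (R1 q W) = DR q (T2 W)"
proof (rule extP[OF lin_comp[OF R1(1) T2(1)] lin_comp[OF T2(1) DR_lin]])
  fix u v
  show "T2 (R1 q (tp u v)) = DR q (T2 (tp u v))"
    by (rule cancel_l) (simp add: R1(2) T2c DR_m DR_tm[symmetric])
qed

lemma L1_T3: "L1 y (T3 (tp p q)) = DR q (tp y p)"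
  by (rule cancel_l) (simp add: Rel5[symmetric] T3c Rel8 DR_tm)

lemma L4: "T2 (J y (T1 Z)) = L1 y (T3 Z)"
proof (rule extP[OF lin_comp[OF lin_comp[OF T1(1) J(1)] T2(1)] lin_comp[OF T3_lin L1(1)]])
  fix p q
  show "T2 (J y (T1 (tp p q))) = L1 y (T3 (tp p q))"
    by (simp add: AX2[symmetric] T2_R1 iT2(2) L1_T3)
qed

lemma T2_L1: "T2 (L1 y Z) = L1 y (T2 Z)"
proof (rule extP[OF lin_comp[OF L1(1) T2(1)] lin_comp[OF T2(1) L1(1)]])
  fix u v
  show "T2 (L1 y (tp u v)) = L1 y (T2 (tp u v))"
    by (rule cancel_l) (simp add: L1(2) T2c Rel5[symmetric] Ma1_Ma1)
qed

lemma iT2_L1: "iT2 (L1 y V) = L1 y (iT2 V)"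
  by (metis T2_L1 iT2(2) iT2(3))

lemma ex_b0: "\<exists>b. e b = 1"
proof -
  have "\<exists>b. e b \<noteq> 0"
  proof (rule ccontr)
    assume "\<not> (\<exists>b. e b \<noteq> 0)"
    then have e0: "e b = 0" for b by blast
    have "E1 z = 0" for z
      by (rule extP[OF E1(1) lin_const0[OF vsT vsA]]) (simp add: E1(2) e0)
    then have mz: "m a b = 0" for a b using cou1[of "tp a b"] by (simp add: mu(2))
    have "(a::'a) = 0" for a by (rule nd1) (rule mz)
    then show False using nt by blast
  qed
  then obtain b where b: "e b \<noteq> 0" by blast
  have "e (sA (inverse (e b)) b) = 1" using b by (simp add: lin_scale[OF e_lin])
  then show ?thesis by blast
qed

definition "b0 = (SOME b. e b = 1)"
lemma b0: "e b0 = 1" unfolding b0_def using someI_ex[OF ex_b0] .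

definition "W a = iT2 (T3 (iT1 (tp a b0)))"
definition "f a = E2 (W a)"

lemma L1_W: "L1 y (W a) = tp (Rp y a) b0"
proof -
  have "L1 y (W a) = iT2 (L1 y (T3 (iT1 (tp a b0))))" by (simp add: W_def iT2_L1)
  also have "\<dots> = iT2 (T2 (J y (T1 (iT1 (tp a b0)))))" by (simp add: L4)
  also have "\<dots> = tp (Rp y a) b0" by (simp add: iT2(3) iT1(2) J(2) Rp_def)
  finally show ?thesis .
qed

lemma f_Rp: "m y (f a) = Rp y a"
proof -
  have "m y (f a) = E2 (L1 y (W a))" by (simp add: f_def E2_L1)
  also have "\<dots> = Rp y a" by (simp add: L1_W E2(2) b0)
  finally show ?thesis .
qed

lemma f_S: "S a x = m (f a) x"
  by (rule cancelA_l) (simp add: S_Rp f_Rp[symmetric] assoc)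

lemma f_lin: "Vector_Spaces.linear sA sA f"
proof -
  have "Vector_Spaces.linear sA sA (\<lambda>a. E2 (iT2 (T3 (iT1 (tp a b0)))))"
    by (rule lin_comp[OF lin_comp[OF lin_comp[OF lin_comp[OF tp_lin1 iT1(1)] T3_lin] iT2(1)] E2(1)])
  then show ?thesis unfolding f_def W_def .
qed

lemma f_anti: "f (m a b) = m (f b) (f a)"
proof (rule cancelA_r)
  fix x
  have "m (f (m a b)) x = S (m a b) x" by (simp add: f_S)
  also have "\<dots> = S b (S a x)" by (rule S_anti)
  also have "\<dots> = m (m (f b) (f a)) x" by (simp add: f_S assoc)
  finally show "m (f (m a b)) x = m (m (f b) (f a)) x" .
qed

end


context pr begin

definition "F = tlift sT sT tp (\<lambda>u v. tp (f u) v)"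
definition "Gf = tlift sT sT tp (\<lambda>u v. tp u (f v))"

lemma F: "Vector_Spaces.linear sT sT F" "F (tp u v) = tp (f u) v"
  unfolding F_def by (rule tlP[OF vsT lin_comp[OF f_lin tp_lin1] tp_lin2])+

lemma Gf: "Vector_Spaces.linear sT sT Gf" "Gf (tp u v) = tp u (f v)"
  unfolding Gf_def by (rule tlP[OF vsT tp_lin1 lin_comp[OF f_lin tp_lin2]])+

lemma L1_F: "L1 y (F V) = J y V"
  by (rule extP[OF lin_comp[OF F(1) L1(1)] J(1)]) (simp add: F(2) L1(2) J(2) f_Rp Rp_def)

lemma L1_inj:
  assumes "\<And>y. L1 y V = L1 y V'"
  shows "V = V'"
proof (rule cancel_l)
  fix x
  show "tm x V = tm x V'"
    by (rule extP[OF tm_lin1 tm_lin1]) (simp add: Rel7[symmetric] assms)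
qed

lemma F_T1: "F (T1 Z) = iT2 (T3 Z)"
proof -
  have "T2 (F (T1 Z)) = T3 Z"
    by (rule L1_inj) (simp add: T2_L1[symmetric] L1_F L4)
  then show ?thesis by (metis iT2(3))
qed

lemma L1_T3': "L1 x (T3 (tp p q)) = M1b p (T2 (tp x q))"
  by (rule cancel_l) (simp add: Rel5[symmetric] T3c Rel6[symmetric] T2c R1_Ma1)

lemma E2_T3: "E2 (T3 z) = E1 z"
proof (rule extP[OF lin_comp[OF T3_lin E2(1)] E1(1)])
  fix p q
  show "E2 (T3 (tp p q)) = E1 (tp p q)"
  proof (rule cancelA_l)
    fix x
    have "m x (E2 (T3 (tp p q))) = E2 (L1 x (T3 (tp p q)))" by (simp add: E2_L1)
    also have "\<dots> = sA (e p) (m x q)" by (simp add: L1_T3' E2_M1b cou2 mu(2))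
    also have "\<dots> = m x (E1 (tp p q))" by (simp add: E1(2) lin_scale[OF ml2])
    finally show "m x (E2 (T3 (tp p q))) = m x (E1 (tp p q))" .
  qed
qed

lemma L6: "mu (F (T1 Z)) = E1 Z"
  by (simp add: F_T1 mu_iT2 E2_T3)

lemma L7: "mu (Gf (T2 z)) = E2 z"
proof (rule cancelA_r)
  fix w
  have a: "mu (R1 w (Gf V)) = mu (K w V)" for V
    by (rule extP[OF lin_comp[OF lin_comp[OF Gf(1) R1(1)] mu(1)] lin_comp[OF K(1) mu(1)]])
      (simp add: Gf(2) R1(2) K(2) mu(2) f_S assoc)
  have "m (mu (Gf (T2 z))) w = mu (R1 w (Gf (T2 z)))" by (simp add: mu_R1)
  also have "\<dots> = m (E2 z) w" by (simp add: a muK)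
  finally show "m (mu (Gf (T2 z))) w = m (E2 z) w" .
qed

lemma R1_T4: "R1 w (T4 (tp u v)) = Ma1 v (T1 (tp u w))"
  by (rule cancel_r) (simp add: Rel6 T4c Rel5 T1c L1_M1b)

lemma F_R1: "F (R1 w V) = R1 w (F V)"
  by (rule extP[OF lin_comp[OF R1(1) F(1)] lin_comp[OF F(1) R1(1)]]) (simp add: F(2) R1(2))

lemma muF_Ma1: "mu (F (Ma1 v V)) = m (f v) (mu (F V))"
  by (rule extP[OF lin_comp[OF lin_comp[OF Ma1(1) F(1)] mu(1)] lin_comp[OF lin_comp[OF F(1) mu(1)] ml2]])
    (simp add: F(2) Ma1(2) mu(2) f_anti assoc)

lemma G_L1: "Gf (L1 x V) = L1 x (Gf V)"
  by (rule extP[OF lin_comp[OF L1(1) Gf(1)] lin_comp[OF Gf(1) L1(1)]]) (simp add: Gf(2) L1(2))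

lemma muG_M1b: "mu (Gf (M1b u V)) = m (mu (Gf V)) (f u)"
  by (rule extP[OF lin_comp[OF lin_comp[OF M1b(1) Gf(1)] mu(1)] lin_comp[OF lin_comp[OF Gf(1) mu(1)] ml1]])
    (simp add: Gf(2) M1b(2) mu(2) f_anti assoc)

definition "Q = tlift sT sA tp (\<lambda>u v. m (f v) u)"
definition "Q2 = tlift sT sA tp (\<lambda>u v. m v (f u))"

lemma Q: "Vector_Spaces.linear sT sA Q" "Q (tp u v) = m (f v) u"
  unfolding Q_def by (rule tlP[OF vsA ml2 lin_comp[OF f_lin ml1]])+

lemma Q2: "Vector_Spaces.linear sT sA Q2" "Q2 (tp u v) = m v (f u)"
  unfolding Q2_def by (rule tlP[OF vsA lin_comp[OF f_lin ml2] ml1])+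

lemma Q_fl: "Q (fl z) = mu (F z)"
  by (rule extP[OF lin_comp[OF fl(1) Q(1)] lin_comp[OF F(1) mu(1)]]) (simp add: fl(2) Q(2) F(2) mu(2))

lemma Q2_fl: "Q2 (fl z) = mu (Gf z)"
  by (rule extP[OF lin_comp[OF fl(1) Q2(1)] lin_comp[OF Gf(1) mu(1)]]) (simp add: fl(2) Q2(2) Gf(2) mu(2))

lemma Q_T1c: "Q (c.T1 z) = f (c.E1 z)"
proof (rule extP[OF lin_comp[OF c.T1(1) Q(1)] lin_comp[OF c.E1(1) f_lin]])
  fix u v
  have "mu (F (T4 (tp u v))) = sA (e u) (f v)"
  proof (rule cancelA_r)
    fix w
    have "m (mu (F (T4 (tp u v)))) w = mu (F (R1 w (T4 (tp u v))))" by (simp add: mu_R1 F_R1)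
    also have "\<dots> = m (f v) (mu (F (T1 (tp u w))))" by (simp add: R1_T4 muF_Ma1)
    also have "\<dots> = m (sA (e u) (f v)) w" by (simp add: L6 E1(2) lin_scale[OF ml2] lin_scale[OF ml1])
    finally show "m (mu (F (T4 (tp u v)))) w = m (sA (e u) (f v)) w" .
  qed
  then show "Q (c.T1 (tp u v)) = f (c.E1 (tp u v))"
    by (subst c_T1) (simp only: Q_fl, simp add: c.E1(2) E1(2) e_eq lin_scale[OF f_lin])
qed

lemma Q2_T2c: "Q2 (c.T2 z) = f (c.E2 z)"
proof (rule extP[OF lin_comp[OF c.T2(1) Q2(1)] lin_comp[OF c.E2(1) f_lin]])
  fix u v
  have "mu (Gf (T3 (tp u v))) = sA (e v) (f u)"
  proof (rule cancelA_l)
    fix x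
    have "m x (mu (Gf (T3 (tp u v)))) = mu (Gf (L1 x (T3 (tp u v))))" by (simp add: mu_L1 G_L1)
    also have "\<dots> = m (mu (Gf (T2 (tp x v)))) (f u)" by (simp add: L1_T3' muG_M1b)
    also have "\<dots> = m x (sA (e v) (f u))" by (simp add: L7 E2(2) lin_scale[OF ml2] lin_scale[OF ml1])
    finally show "m x (mu (Gf (T3 (tp u v)))) = m x (sA (e v) (f u))" .
  qed
  then show "Q2 (c.T2 (tp u v)) = f (c.E2 (tp u v))"
    by (subst c_T2) (simp only: Q2_fl, simp add: c.E2(2) E2(2) e_eq lin_scale[OF f_lin])
qed

lemma H1:
  assumes g1: "\<And>a x. c.S a x = m (g a) x"
  shows "m (f x) a = m (f x) (f (g a))"
proof -
  have "m (f x) a = Q (c.T1 (c.iT1 (tp a x)))" by (simp add: c.iT1(2) Q(2))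
  also have "\<dots> = f (c.S a x)" by (simp add: Q_T1c c.S_def')
  also have "\<dots> = m (f x) (f (g a))" by (simp add: g1 f_anti)
  finally show ?thesis .
qed

lemma H2:
  assumes g2: "\<And>y b. c.E2 (c.iT2 (tp y b)) = m y (g b)"
  shows "m (f (g b)) (f y) = m b (f y)"
proof -
  have "m b (f y) = Q2 (c.T2 (c.iT2 (tp y b)))" by (simp add: c.iT2(2) Q2(2))
  also have "\<dots> = f (m y (g b))" by (simp add: Q2_T2c g2)
  also have "\<dots> = m (f (g b)) (f y)" by (simp add: f_anti)
  finally show ?thesis by simp
qed

lemma final:
  assumes g1: "\<And>a x. c.S a x = m (g a) x"
    and g2: "\<And>y b. c.E2 (c.iT2 (tp y b)) = m y (g b)"
    and g3: "\<And>a b. g (m a b) = m (g b) (g a)"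
  shows "f (g a) = a"
proof -
  define z where "z a = f (g a) - a" for a
  have h1: "m (f x) (z a) = 0" for x a
    unfolding z_def using H1[OF g1, of x a] by (simp add: lin_diff[OF ml2])
  have h2: "m (z b) (f y) = 0" for b y
    unfolding z_def using H2[OF g2, of b y] by (simp add: lin_diff[OF ml1])
  have zm: "z (m q a) = m q (z a)" for q a
  proof -
    have "z (m q a) - m q (z a) = m (f (g q)) (f (g a)) - m q (f (g a))"
      unfolding z_def by (simp add: g3 f_anti lin_diff[OF ml2])
    also have "\<dots> = m (z q) (f (g a))" unfolding z_def by (simp add: lin_diff[OF ml1])
    also have "\<dots> = 0" by (rule h2)
    finally show ?thesis by simp
  qed
  have "m y (z a) = 0" for y
  proof -
    have psi: "m (mu (F V)) (z a) = 0" for V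
    proof (rule extP[OF lin_comp[OF lin_comp[OF F(1) mu(1)] ml1] lin_const0[OF vsT vsA]])
      fix p q
      show "m (mu (F (tp p q))) (z a) = 0"
        by (simp only: F(2) mu(2) assoc, subst zm[symmetric], rule h1)
    qed
    have "y = mu (F (T1 (tp b0 y)))" by (simp add: L6 E1(2) b0)
    then show ?thesis using psi by metis
  qed
  then have "z a = 0" by (rule nd2)
  then show ?thesis unfolding z_def by simp
qed

end


theorem proposition3p1:
  fixes sA :: "'k::field \<Rightarrow> 'a::ab_group_add \<Rightarrow> 'a"
    and sT :: "'k \<Rightarrow> 't::ab_group_add \<Rightarrow> 't"
    and sU :: "'k \<Rightarrow> 'u::ab_group_add \<Rightarrow> 'u"
    and m :: "'a \<Rightarrow> 'a \<Rightarrow> 'a"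
    and tp :: "'a \<Rightarrow> 'a \<Rightarrow> 't" and tq :: "'a \<Rightarrow> 't \<Rightarrow> 'u"
    and DL DR :: "'a \<Rightarrow> 't \<Rightarrow> 't"
    and eps eps_cop :: "'a \<Rightarrow> 'k"
  assumes hopf: "gmhc sA sT sU m tp tq DL DR eps"
    and regular: "gmhc sA sT sU m tp tq (copL sT tp DL) (copL sT tp DR) eps_cop"
  shows "eps_cop = eps \<and>
    (\<exists>f g :: 'a \<Rightarrow> 'a.
        (\<forall>a b. gS sA sT tp m DL eps a b = m (f a) b) \<and>
        (\<forall>a b. gS sA sT tp m (copL sT tp DL) eps_cop a b = m (g a) b) \<and>
        (\<forall>a. g (f a) = a) \<and> (\<forall>a. f (g a) = a))"
proof -
  interpret h1: hs sA sT sU m tp tq DL DR eps by (rule hs.intro[OF hopf])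
  interpret h2: hs sA sT sU m tp tq "copL sT tp DL" "copL sT tp DR" eps_cop by (rule hs.intro[OF regular])
  show ?thesis
  proof (cases "\<exists>x::'a. x \<noteq> 0")
    case False
    then have z: "\<And>x::'a. x = 0" by blast
    have "eps_cop = eps"
    proof
      fix x
      show "eps_cop x = eps x" using z[of x] lin_0[OF h1.e_lin] lin_0[OF h2.e_lin] by simp
    qed
    moreover have "\<exists>f g :: 'a \<Rightarrow> 'a.
        (\<forall>a b. gS sA sT tp m DL eps a b = m (f a) b) \<and>
        (\<forall>a b. gS sA sT tp m (copL sT tp DL) eps_cop a b = m (g a) b) \<and>
        (\<forall>a. g (f a) = a) \<and> (\<forall>a. f (g a) = a)"
      by (rule exI[of _ "\<lambda>a. a"], rule exI[of _ "\<lambda>a. a"]) (metis z)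
    ultimately show ?thesis by blast
  next
    case True
    have C2: "gmhc sA sT sU m tp tq (copL sT tp (copL sT tp DL)) (copL sT tp (copL sT tp DR)) eps"
      using hopf by (simp add: h1.copL_copL)
    interpret p1: pr sA sT sU m tp tq DL DR eps eps_cop
      by (rule pr.intro[OF hs.intro[OF hopf] pr_axioms.intro[OF regular True]])
    interpret p2: pr sA sT sU m tp tq "copL sT tp DL" "copL sT tp DR" eps_cop eps
      by (rule pr.intro[OF hs.intro[OF regular] pr_axioms.intro[OF C2 True]])
    have gf: "p2.f (p1.f a) = a" for a
    proof (rule p2.final)
      show "\<And>a x. p2.c.S a x = m (p1.f a) x" by (simp add: h1.copL_copL p1.f_S)
      show "\<And>y b. p2.c.E2 (p2.c.iT2 (tp y b)) = m y (p1.f b)"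
        by (simp add: h1.copL_copL p1.f_Rp h1.Rp_def)
      show "\<And>a b. p1.f (m a b) = m (p1.f b) (p1.f a)" by (rule p1.f_anti)
    qed
    have fg: "p1.f (p2.f a) = a" for a
    proof (rule p1.final)
      show "\<And>a x. gS sA sT tp m (copL sT tp DL) eps_cop a x = m (p2.f a) x" by (simp add: p2.f_S)
      show "\<And>y b. Ieps sA sT tp eps_cop (inv (gT2 sT tp m (copL sT tp DR)) (tp y b)) = m y (p2.f b)"
        by (simp add: p2.f_Rp h2.Rp_def)
      show "\<And>a b. p2.f (m a b) = m (p2.f b) (p2.f a)" by (rule p2.f_anti)
    qed
    show ?thesis
      using p1.e_eq p1.f_S p2.f_S gf fg by blast
  qed
qed


end
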